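(* The co-Finsleroid Indicatrix $\hat{\mathcal I}=\{\hat R: H(g;\hat R)=1\}$ in the dual space, equipped with the Riemannian metric induced by $g^{pq}(g;\hat R)=\frac12\partial^2H^2/\partial R_p\partial R_q$, is a space of constant positive curvature, and its curvature equals that of the Finsleroid Indicatrix: $$\mathcal R_{\text{co-Finsleroid Indicatrix}}=h^2=1-\tfrac14g^2=-\tfrac14D_{\{\hat B\}},\qquad 0<\mathcal R_{\text{co-Finsleroid Indicatrix}}\le1,$$ where $D_{\{\hat B\}}=g^2-4$ is the discriminant of $\hat B=\hat Z^2-g\hat q\hat Z+\hat q^2$ as a quadratic form in $(\hat Z,\hat q)$.
   Context: Let $N\ge2$. The dual space consists of $\hat R=(R_1,\dots,R_N)\in\mathbb{R}^N$; write $\hat Z=R_N$; indices $a,b$ run over $1,\dots,N-1$, $p,q$ over $1,\dots,N$, repeated indices summed. Fix a symmetric positive-definite matrix $(r^{ab})$ and put $\hat q=\sqrt{r^{ab}R_aR_b}$. Fix $g\in(-2,2)$, $h=\sqrt{1-g^2/4}$, $G=g/h$. Define $\hat B=\hat Z^2-g\hat q\hat Z+\hat q^2$, $\hat A=\hat Z-\frac12g\hat q$, $\hat\Phi=\arctan(\hat A/(h\hat q))$ for $\hat q>0$ ($\hat\Phi=\pm\pi/2$ if $\hat q=0$, $\hat Z\gtrless0$), $\hat J=e^{-\frac12G\hat\Phi}$ and the Finsleroid Hamiltonian function $H(g;\hat R)=\sqrt{\hat B}\,\hat J$. "Curvature" means the constant $\kappa$ with Riemann tensor $\kappa(\gamma_{ik}\gamma_{jl}-\gamma_{il}\gamma_{jk})$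 for the induced metric $\gamma$. *)

theory Defs
  imports "HOL-Analysis.Analysis"
begin

(* Dual space R^N is modelled as  (real^'m) \<times> real :  fst = (R_1..R_{N-1}), snd = Z = R_N,
   so N - 1 = CARD('m) \<ge> 1, i.e. N \<ge> 2. *)

definition qhat :: "real^'m^'m \<Rightarrow> real^'m \<Rightarrow> real" where
  "qhat r R = sqrt (\<Sum>a\<in>UNIV. \<Sum>b\<in>UNIV. r$a$b * R$a * R$b)"

definition hh :: "real \<Rightarrow> real" where
  "hh g = sqrt (1 - g^2/4)"

definition GG :: "real \<Rightarrow> real" where
  "GG g = g / hh g"

definition Bhat :: "real \<Rightarrow> real^'m^'m \<Rightarrow> (real^'m) \<times> real \<Rightarrow> real" where
  "Bhat g r Rh = (snd Rh)^2 - g * qhat r (fst Rh) * snd Rh + (qhat r (fst Rh))^2"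

definition Ahat :: "real \<Rightarrow> real^'m^'m \<Rightarrow> (real^'m) \<times> real \<Rightarrow> real" where
  "Ahat g r Rh = snd Rh - g * qhat r (fst Rh) / 2"

definition Phihat :: "real \<Rightarrow> real^'m^'m \<Rightarrow> (real^'m) \<times> real \<Rightarrow> real" where
  "Phihat g r Rh =
     (if qhat r (fst Rh) > 0 then arctan (Ahat g r Rh / (hh g * qhat r (fst Rh)))
      else if snd Rh \<ge> 0 then pi/2 else - pi/2)"

definition Jhat :: "real \<Rightarrow> real^'m^'m \<Rightarrow> (real^'m) \<times> real \<Rightarrow> real" where
  "Jhat g r Rh = exp (- (1/2) * GG g * Phihat g r Rh)"

definition FH :: "real \<Rightarrow> real^'m^'m \<Rightarrow> (real^'m) \<times> real \<Rightarrow> real" where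
  "FH g r Rh = sqrt (Bhat g r Rh) * Jhat g r Rh"

text \<open>Discriminant of the quadratic form Z^2 - g q Z + q^2 in (Z,q): b^2 - 4ac.\<close>
definition discB :: "real \<Rightarrow> real" where
  "discB g = (- g)^2 - 4 * 1 * 1"

text \<open>Second directional derivative: d^2F(x)[v,w].  Contracted with components,
  (1/2) of it applied to F = H^2 is g^{pq} v_p w_q.\<close>
definition hess2 :: "('v::real_normed_vector \<Rightarrow> real) \<Rightarrow> 'v \<Rightarrow> 'v \<Rightarrow> 'v \<Rightarrow> real" where
  "hess2 F x v w = deriv (\<lambda>s. deriv (\<lambda>t. F (x + s *\<^sub>R v + t *\<^sub>R w)) 0) 0"

definition pd :: "'m::finite \<Rightarrow> (real^'m \<Rightarrow> real) \<Rightarrow> real^'m \<Rightarrow> real" where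
  "pd i f u = deriv (\<lambda>t. f (u + t *\<^sub>R axis i 1)) 0"

fun pds :: "'m::finite list \<Rightarrow> (real^'m \<Rightarrow> real) \<Rightarrow> real^'m \<Rightarrow> real" where
  "pds [] f = f"
| "pds (i # is) f = pd i (pds is f)"

definition smooth_fun_on :: "(real^'m::finite) set \<Rightarrow> (real^'m \<Rightarrow> real) \<Rightarrow> bool" where
  "smooth_fun_on U f \<longleftrightarrow>
     (\<forall>is. continuous_on U (pds is f) \<and>
       (\<forall>i. \<forall>u\<in>U. (\<lambda>t. pds is f (u + t *\<^sub>R axis i 1)) differentiable (at 0)))"

definition dphi :: "(real^'m \<Rightarrow> (real^'m) \<times> real) \<Rightarrow> 'm::finite \<Rightarrow> real^'m \<Rightarrow> (real^'m) \<times> real" where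
  "dphi \<phi> i u = ((\<chi> a. pd i (\<lambda>v. fst (\<phi> v) $ a) u), pd i (\<lambda>v. snd (\<phi> v)) u)"

text \<open>Smooth local parametrization (immersion) of the co-Finsleroid indicatrix H = 1,
  away from the axis q = 0 where H^2 fails to be C^2.\<close>
definition coindicatrix_chart ::
  "real \<Rightarrow> real^'m^'m \<Rightarrow> (real^'m::finite) set \<Rightarrow> (real^'m \<Rightarrow> (real^'m) \<times> real) \<Rightarrow> bool" where
  "coindicatrix_chart g r U \<phi> \<longleftrightarrow>
     open U \<and>
     (\<forall>a. smooth_fun_on U (\<lambda>u. fst (\<phi> u) $ a)) \<and> smooth_fun_on U (\<lambda>u. snd (\<phi> u)) \<and>
     (\<forall>u\<in>U. FH g r (\<phi> u) = 1 \<and> qhat r (fst (\<phi> u)) > 0) \<and>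
     (\<forall>u\<in>U. inj (\<lambda>i. dphi \<phi> i u) \<and> independent (range (\<lambda>i. dphi \<phi> i u)))"

definition ind_metric ::
  "real \<Rightarrow> real^'m^'m \<Rightarrow> (real^'m \<Rightarrow> (real^'m) \<times> real) \<Rightarrow> 'm::finite \<Rightarrow> 'm \<Rightarrow> real^'m \<Rightarrow> real" where
  "ind_metric g r \<phi> i j u =
     (1/2) * hess2 (\<lambda>Rh. (FH g r Rh)^2) (\<phi> u) (dphi \<phi> i u) (dphi \<phi> j u)"

definition Gam1 :: "('m::finite \<Rightarrow> 'm \<Rightarrow> real^'m \<Rightarrow> real) \<Rightarrow> 'm \<Rightarrow> 'm \<Rightarrow> 'm \<Rightarrow> real^'m \<Rightarrow> real" where
  "Gam1 gm k i j u = (pd i (gm j k) u + pd j (gm i k) u - pd k (gm i j) u) / 2"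

definition ginv :: "('m::finite \<Rightarrow> 'm \<Rightarrow> real^'m \<Rightarrow> real) \<Rightarrow> real^'m \<Rightarrow> real^'m^'m" where
  "ginv gm u = matrix_inv (\<chi> i j. gm i j u)"

definition Gam2 :: "('m::finite \<Rightarrow> 'm \<Rightarrow> real^'m \<Rightarrow> real) \<Rightarrow> 'm \<Rightarrow> 'm \<Rightarrow> 'm \<Rightarrow> real^'m \<Rightarrow> real" where
  "Gam2 gm l i j u = (\<Sum>m\<in>UNIV. ginv gm u $ l $ m * Gam1 gm m i j u)"

text \<open>R^l_{ijk} = components of R(d_j,d_k)d_i, with R(X,Y) = [nabla_X,nabla_Y] - nabla_[X,Y].\<close>
definition Riem_up :: "('m::finite \<Rightarrow> 'm \<Rightarrow> real^'m \<Rightarrow> real) \<Rightarrow> 'm \<Rightarrow> 'm \<Rightarrow> 'm \<Rightarrow> 'm \<Rightarrow> real^'m \<Rightarrow> real" where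
  "Riem_up gm l i j k u =
     pd j (Gam2 gm l k i) u - pd k (Gam2 gm l j i) u
     + (\<Sum>s\<in>UNIV. Gam2 gm l j s u * Gam2 gm s k i u - Gam2 gm l k s u * Gam2 gm s j i u)"

definition Riem :: "('m::finite \<Rightarrow> 'm \<Rightarrow> real^'m \<Rightarrow> real) \<Rightarrow> 'm \<Rightarrow> 'm \<Rightarrow> 'm \<Rightarrow> 'm \<Rightarrow> real^'m \<Rightarrow> real" where
  "Riem gm l i j k u = (\<Sum>m\<in>UNIV. gm l m u * Riem_up gm m i j k u)"

end

theory Submission
  imports Defs
begin

lemma ev_in_open:
  fixes w :: "'a::real_normed_vector"
  assumes "open U" "u \<in> U"
  shows "eventually (\<lambda>t. u + t *\<^sub>R w \<in> U) (nhds (0::real))"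
proof -
  obtain e where e: "e > 0" "ball u e \<subseteq> U" using assms open_contains_ball by blast
  have "\<forall>t. dist t 0 < e / (norm w + 1) \<longrightarrow> u + t *\<^sub>R w \<in> U"
  proof (intro allI impI)
    fix t :: real assume "dist t 0 < e / (norm w + 1)"
    moreover have "norm w + 1 > 0" using norm_ge_zero[of w] by linarith
    ultimately have "\<bar>t\<bar> * (norm w + 1) < e" by (simp add: pos_less_divide_eq)
    hence "\<bar>t\<bar> * norm w < e" by (smt (verit, best) abs_ge_zero mult_nonneg_nonneg distrib_left)
    hence "dist u (u + t *\<^sub>R w) < e" by (simp add: dist_norm)
    thus "u + t *\<^sub>R w \<in> U" using e by auto
  qed
  moreover have "e / (norm w + 1) > 0" using e norm_ge_zero[of w] by (intro divide_pos_pos) linarith+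
  ultimately show ?thesis unfolding eventually_nhds_metric by blast
qed

lemma pd_local:
  assumes "open U" "u \<in> U" "\<forall>v\<in>U. f v = g v"
  shows "pd i f u = pd i g u"
  unfolding pd_def
proof (rule deriv_cong_ev)
  show "\<forall>\<^sub>F x in nhds 0. f (u + x *\<^sub>R axis i 1) = g (u + x *\<^sub>R axis i 1)"
    using ev_in_open[OF assms(1,2), of "axis i 1"] assms(3) by (auto elim: eventually_mono)
qed simp

definition axd :: "(real^'m::finite \<Rightarrow> real) \<Rightarrow> (real^'m) set \<Rightarrow> bool" where
  "axd f U \<longleftrightarrow> (\<forall>i. \<forall>u\<in>U. (\<lambda>t. f (u + t *\<^sub>R axis i 1)) differentiable (at 0))"

lemma pds_append: "pds (is @ js) f = pds is (pds js f)"
  by (induction "is") auto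

lemma smooth_iff: "smooth_fun_on U f \<longleftrightarrow> (\<forall>is. continuous_on U (pds is f) \<and> axd (pds is f) U)"
  unfolding smooth_fun_on_def axd_def by blast

lemma smooth_coinduct:
  assumes "P f" and step: "\<And>f. P f \<Longrightarrow> continuous_on U f \<and> axd f U \<and> (\<forall>i. P (pd i f))"
  shows "smooth_fun_on U f"
proof -
  have "P (pds is f)" for "is"
    by (induction "is") (use assms in auto)
  thus ?thesis unfolding smooth_iff using step by blast
qed

lemma smooth_pd: "smooth_fun_on U f \<Longrightarrow> smooth_fun_on U (pd i f)"
  unfolding smooth_iff
proof
  fix "is" assume "\<forall>is. continuous_on U (pds is f) \<and> axd (pds is f) U"
  then have "continuous_on U (pds (is @ [i]) f) \<and> axd (pds (is @ [i]) f) U" by blast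
  thus "continuous_on U (pds is (pd i f)) \<and> axd (pds is (pd i f)) U"
    by (simp add: pds_append)
qed

lemma smooth_props:
  assumes "smooth_fun_on U f"
  shows "continuous_on U f" "axd f U" "smooth_fun_on U (pd i f)"
  using assms smooth_pd[OF assms] unfolding smooth_iff by (metis pds.simps(1))+

lemma axd_deriv:
  assumes "axd f U" "u \<in> U"
  shows "((\<lambda>t. f (u + t *\<^sub>R axis i 1)) has_real_derivative pd i f u) (at 0)"
  using assms unfolding axd_def pd_def by (simp add: DERIV_deriv_iff_real_differentiable)

inductive alg :: "(real^'m::finite) set \<Rightarrow> (real^'m \<Rightarrow> real) \<Rightarrow> bool" for U where
  base: "smooth_fun_on U f \<Longrightarrow> alg U f"
| cnst: "alg U (\<lambda>u. c)"
| add: "alg U f \<Longrightarrow> alg U g \<Longrightarrow> alg U (\<lambda>u. f u + g u)"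
| mul: "alg U f \<Longrightarrow> alg U g \<Longrightarrow> alg U (\<lambda>u. f u * g u)"
| inv: "alg U f \<Longrightarrow> \<forall>u\<in>U. f u \<noteq> 0 \<Longrightarrow> alg U (\<lambda>u. inverse (f u))"
| sqr: "alg U f \<Longrightarrow> \<forall>u\<in>U. f u > 0 \<Longrightarrow> alg U (\<lambda>u. sqrt (f u))"
| cong: "alg U f \<Longrightarrow> \<forall>u\<in>U. g u = f u \<Longrightarrow> alg U g"

lemma pd_eqI:
  assumes "((\<lambda>t. f (u + t *\<^sub>R axis i 1)) has_real_derivative D) (at 0)"
  shows "pd i f u = D"
  using assms unfolding pd_def by (rule DERIV_imp_deriv)

lemma alg_props:
  assumes "open U" "alg U f"
  shows "continuous_on U f \<and> (\<forall>i. \<forall>u\<in>U. ((\<lambda>t. f (u + t *\<^sub>R axis i 1)) has_real_derivative pd i f u) (at 0))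
     \<and> (\<forall>i. alg U (pd i f))"
  using assms(2)
proof (induction rule: alg.induct)
  case (base f)
  then show ?case using smooth_props[OF base] axd_deriv alg.base by blast
next
  case (cnst c)
  have d: "((\<lambda>t. c) has_real_derivative 0) (at 0)" by simp
  have P: "pd i (\<lambda>v. c) u = 0" if "u \<in> U" for i u by (intro pd_eqI) simp
  have a: "alg U (pd i (\<lambda>v. c))" for i
    by (rule alg.cong[OF alg.cnst[of U 0]]) (use P in simp)
  show ?case using d P a by (simp add: continuous_on_const)
next
  case (add f g)
  have D: "((\<lambda>t. f (u + t *\<^sub>R axis i 1) + g (u + t *\<^sub>R axis i 1)) has_real_derivative pd i f u + pd i g u) (at 0)"
    if "u \<in> U" for i u using add that by (intro DERIV_add) auto
  have P: "pd i (\<lambda>u. f u + g u) u = pd i f u + pd i g u" if "u \<in> U" for i u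
    using D[OF that] by (rule pd_eqI)
  have a: "alg U (pd i (\<lambda>u. f u + g u))" for i
    by (rule alg.cong[of U "\<lambda>u. pd i f u + pd i g u"]) (use add P in \<open>auto intro: alg.add\<close>)
  have c: "continuous_on U (\<lambda>u. f u + g u)" using add by (intro continuous_on_add) auto
  have D': "((\<lambda>t. f (u + t *\<^sub>R axis i 1) + g (u + t *\<^sub>R axis i 1)) has_real_derivative pd i (\<lambda>u. f u + g u) u) (at 0)"
    if "u \<in> U" for i u unfolding P[OF that] by (rule D[OF that])
  show ?case using c a D' by blast
next
  case (mul f g)
  have D0: "((\<lambda>t. f (u + t *\<^sub>R axis i 1) * g (u + t *\<^sub>R axis i 1)) has_real_derivative
          pd i f u * g (u + 0 *\<^sub>R axis i 1) + pd i g u * f (u + 0 *\<^sub>R axis i 1)) (at 0)"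
    if "u \<in> U" for i u using mul that by (intro DERIV_mult) auto
  have D: "((\<lambda>t. f (u + t *\<^sub>R axis i 1) * g (u + t *\<^sub>R axis i 1)) has_real_derivative
          pd i f u * g u + f u * pd i g u) (at 0)" if "u \<in> U" for i u using D0[OF that] by (simp add: mult.commute)
  have P: "pd i (\<lambda>u. f u * g u) u = pd i f u * g u + f u * pd i g u" if "u \<in> U" for i u
    using D[OF that] by (rule pd_eqI)
  have a: "alg U (pd i (\<lambda>u. f u * g u))" for i
    by (rule alg.cong[of U "\<lambda>u. pd i f u * g u + f u * pd i g u"]) (use mul P in \<open>auto intro!: alg.add alg.mul\<close>)
  have c: "continuous_on U (\<lambda>u. f u * g u)" using mul by (intro continuous_on_mult) auto
  have D': "((\<lambda>t. f (u + t *\<^sub>R axis i 1) * g (u + t *\<^sub>R axis i 1)) has_real_derivative pd i (\<lambda>u. f u * g u) u) (at 0)"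
    if "u \<in> U" for i u unfolding P[OF that] by (rule D[OF that])
  show ?case using c a D' by blast
next
  case (inv f)
  have cf: "continuous_on U f" using inv by blast
  have D: "((\<lambda>t. inverse (f (u + t *\<^sub>R axis i 1))) has_real_derivative
          - (pd i f u * (inverse (f u) * inverse (f u)))) (at 0)" if "u \<in> U" for i u
  proof -
    have "((\<lambda>t. inverse (f (u + t *\<^sub>R axis i 1))) has_real_derivative
          - (pd i f u * inverse (f (u + 0 *\<^sub>R axis i 1) ^ Suc (Suc 0)))) (at 0)"
      using inv that by (intro DERIV_inverse_fun) auto
    thus ?thesis by (simp add: algebra_simps power2_eq_square)
  qed
  have P: "pd i (\<lambda>u. inverse (f u)) u = - (pd i f u * (inverse (f u) * inverse (f u)))" if "u \<in> U" for i u
    using D[OF that] by (rule pd_eqI)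
  have a0: "alg U (\<lambda>u. - (pd i f u * (inverse (f u) * inverse (f u))))" for i
  proof -
    have "alg U (\<lambda>u. (-1) * (pd i f u * (inverse (f u) * inverse (f u))))"
      using inv by (intro alg.mul alg.cnst alg.inv) auto
    thus ?thesis by (rule alg.cong) simp
  qed
  have a: "alg U (pd i (\<lambda>u. inverse (f u)))" for i
    by (rule alg.cong[OF a0[of i]]) (use P in auto)
  have c: "continuous_on U (\<lambda>u. inverse (f u))" using inv cf by (intro continuous_on_inverse) auto
  have D': "((\<lambda>t. inverse (f (u + t *\<^sub>R axis i 1))) has_real_derivative pd i (\<lambda>u. inverse (f u)) u) (at 0)"
    if "u \<in> U" for i u unfolding P[OF that] by (rule D[OF that])
  show ?case using c a D' by blast
next
  case (sqr f)
  have cf: "continuous_on U f" using sqr by blast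
  have D: "((\<lambda>t. sqrt (f (u + t *\<^sub>R axis i 1))) has_real_derivative
          pd i f u * (inverse (sqrt (f u)) * (1/2))) (at 0)" if "u \<in> U" for i u
  proof -
    have "((\<lambda>t. sqrt (f (u + t *\<^sub>R axis i 1))) has_real_derivative
          inverse (sqrt (f (u + 0 *\<^sub>R axis i 1))) / 2 * pd i f u) (at 0)"
      using sqr that by (intro DERIV_chain2[OF DERIV_real_sqrt]) auto
    thus ?thesis by (simp add: algebra_simps)
  qed
  have P: "pd i (\<lambda>u. sqrt (f u)) u = pd i f u * (inverse (sqrt (f u)) * (1/2))" if "u \<in> U" for i u
    using D[OF that] by (rule pd_eqI)
  have a0: "alg U (\<lambda>u. pd i f u * (inverse (sqrt (f u)) * (1/2)))" for i
    using sqr by (intro alg.mul alg.cnst alg.inv alg.sqr) auto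
  have a: "alg U (pd i (\<lambda>u. sqrt (f u)))" for i
    by (rule alg.cong[OF a0[of i]]) (use P in auto)
  have c: "continuous_on U (\<lambda>u. sqrt (f u))" using cf by (intro continuous_on_real_sqrt)
  have D': "((\<lambda>t. sqrt (f (u + t *\<^sub>R axis i 1))) has_real_derivative pd i (\<lambda>u. sqrt (f u)) u) (at 0)"
    if "u \<in> U" for i u unfolding P[OF that] by (rule D[OF that])
  show ?case using c a D' by blast
next
  case (cong f g)
  have ev: "((\<lambda>t. g (u + t *\<^sub>R axis i 1)) has_real_derivative pd i f u) (at 0)" if "u \<in> U" for i u
  proof -
    have "eventually (\<lambda>t. f (u + t *\<^sub>R axis i 1) = g (u + t *\<^sub>R axis i 1)) (nhds 0)"
      using ev_in_open[OF assms(1) that, of "axis i 1"] cong by (auto elim: eventually_mono)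
    moreover have "((\<lambda>t. f (u + t *\<^sub>R axis i 1)) has_real_derivative pd i f u) (at 0)"
      using cong that by blast
    ultimately show ?thesis by (subst DERIV_cong_ev[symmetric]) auto
  qed
  have P: "pd i g u = pd i f u" if "u \<in> U" for i u using ev[OF that] by (rule pd_eqI)
  have a: "alg U (pd i g)" for i
    by (rule alg.cong[of U "pd i f"]) (use cong P in auto)
  have c: "continuous_on U g"
    using cong continuous_on_cong[of U U g f] by auto
  have D': "((\<lambda>t. g (u + t *\<^sub>R axis i 1)) has_real_derivative pd i g u) (at 0)"
    if "u \<in> U" for i u using ev[OF that] P[OF that] by simp
  show ?case using c a D' by blast
qed

lemma alg_smooth:
  assumes "open U" "alg U f" shows "smooth_fun_on U f"
  using assms(2)
proof (rule smooth_coinduct)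
  fix f assume "alg U f"
  from alg_props[OF assms(1) this] show "continuous_on U f \<and> axd f U \<and> (\<forall>i. alg U (pd i f))"
    unfolding axd_def real_differentiable_def by blast
qed

lemma alg_deriv:
  assumes "open U" "alg U f" "u \<in> U"
  shows "((\<lambda>t. f (u + t *\<^sub>R axis i 1)) has_real_derivative pd i f u) (at 0)"
  using alg_props[OF assms(1,2)] assms(3) by blast

lemma alg_pd: "open U \<Longrightarrow> alg U f \<Longrightarrow> alg U (pd i f)"
  using alg_props by blast

lemma alg_cont: "open U \<Longrightarrow> alg U f \<Longrightarrow> continuous_on U f"
  using alg_props by blast

lemma alg_sum: "finite S \<Longrightarrow> (\<And>s. s \<in> S \<Longrightarrow> alg U (f s)) \<Longrightarrow> alg U (\<lambda>u. \<Sum>s\<in>S. f s u)"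
proof (induction S rule: finite_induct)
  case empty then show ?case using alg.cnst[of U 0] by simp
next
  case (insert x F) then show ?case by (simp add: alg.add)
qed

lemma alg_prod: "finite S \<Longrightarrow> (\<And>s. s \<in> S \<Longrightarrow> alg U (f s)) \<Longrightarrow> alg U (\<lambda>u. \<Prod>s\<in>S. f s u)"
proof (induction S rule: finite_induct)
  case empty then show ?case using alg.cnst[of U 1] by simp
next
  case (insert x F) then show ?case by (simp add: alg.mul)
qed

lemma alg_neg: "alg U f \<Longrightarrow> alg U (\<lambda>u. - f u)"
proof -
  assume "alg U f"
  hence "alg U (\<lambda>u. (-1) * f u)" by (rule alg.mul[OF alg.cnst])
  thus ?thesis by (rule alg.cong) simp
qed

lemma alg_diff: "alg U f \<Longrightarrow> alg U g \<Longrightarrow> alg U (\<lambda>u. f u - g u)"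
proof -
  assume "alg U f" "alg U g"
  hence "alg U (\<lambda>u. f u + - g u)" by (intro alg.add alg_neg)
  thus ?thesis by (rule alg.cong) simp
qed

lemma alg_divide: "alg U f \<Longrightarrow> alg U g \<Longrightarrow> \<forall>u\<in>U. g u \<noteq> 0 \<Longrightarrow> alg U (\<lambda>u. f u / g u)"
proof -
  assume "alg U f" "alg U g" "\<forall>u\<in>U. g u \<noteq> 0"
  hence "alg U (\<lambda>u. f u * inverse (g u))" by (intro alg.mul alg.inv)
  thus ?thesis by (rule alg.cong) (simp add: divide_inverse)
qed

lemma alg_pow: "alg U f \<Longrightarrow> alg U (\<lambda>u. f u ^ n)"
  by (induction n) (auto intro: alg.cnst alg.mul)

lemma alg_cmul: "alg U f \<Longrightarrow> alg U (\<lambda>u. c * f u)"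
  by (rule alg.mul[OF alg.cnst])

lemma pd_const: "pd i (\<lambda>v. c) u = 0"
  by (rule pd_eqI) simp

lemma pd_add: "open U \<Longrightarrow> alg U f \<Longrightarrow> alg U g \<Longrightarrow> u \<in> U \<Longrightarrow>
   pd i (\<lambda>u. f u + g u) u = pd i f u + pd i g u"
  by (rule pd_eqI, rule DERIV_add; rule alg_deriv; assumption)

lemma pd_diff: "open U \<Longrightarrow> alg U f \<Longrightarrow> alg U g \<Longrightarrow> u \<in> U \<Longrightarrow>
   pd i (\<lambda>u. f u - g u) u = pd i f u - pd i g u"
  by (rule pd_eqI, rule DERIV_diff; rule alg_deriv; assumption)

lemma pd_mul:
  assumes a: "open U" "alg U f" "alg U g" "u \<in> U"
  shows "pd i (\<lambda>u. f u * g u) u = pd i f u * g u + f u * pd i g u"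
proof (rule pd_eqI)
  have "((\<lambda>t. f (u + t *\<^sub>R axis i 1) * g (u + t *\<^sub>R axis i 1)) has_real_derivative
          pd i f u * g (u + 0 *\<^sub>R axis i 1) + pd i g u * f (u + 0 *\<^sub>R axis i 1)) (at 0)"
    by (rule DERIV_mult) (rule alg_deriv[OF a(1,2,4)], rule alg_deriv[OF a(1,3,4)])
  thus "((\<lambda>t. f (u + t *\<^sub>R axis i 1) * g (u + t *\<^sub>R axis i 1)) has_real_derivative
          pd i f u * g u + f u * pd i g u) (at 0)" by (simp add: mult.commute)
qed

lemma pd_cmul: "open U \<Longrightarrow> alg U f \<Longrightarrow> u \<in> U \<Longrightarrow>
   pd i (\<lambda>u. c * f u) u = c * pd i f u"
  by (rule pd_eqI, rule DERIV_cmult; rule alg_deriv; assumption)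

lemma pd_sum: "open U \<Longrightarrow> finite S \<Longrightarrow> (\<And>s. s \<in> S \<Longrightarrow> alg U (f s)) \<Longrightarrow> u \<in> U \<Longrightarrow>
   pd i (\<lambda>u. \<Sum>s\<in>S. f s u) u = (\<Sum>s\<in>S. pd i (f s) u)"
  by (rule pd_eqI, rule DERIV_sum; rule alg_deriv; assumption)

lemma pd_const_on: "open U \<Longrightarrow> u \<in> U \<Longrightarrow> \<forall>v\<in>U. f v = c \<Longrightarrow> pd i f u = 0"
  using pd_local[of U u f "\<lambda>v. c" i] pd_const by simp

lemma line_deriv_i:
  assumes "open U" "alg U F" "u + s *\<^sub>R axis i 1 + t *\<^sub>R axis j 1 \<in> U"
  shows "((\<lambda>s. F (u + s *\<^sub>R axis i 1 + t *\<^sub>R axis j 1)) has_real_derivative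
            pd i F (u + s *\<^sub>R axis i 1 + t *\<^sub>R axis j 1)) (at s)"
proof -
  have "((\<lambda>x. F ((u + s *\<^sub>R axis i 1 + t *\<^sub>R axis j 1) + x *\<^sub>R axis i 1)) has_real_derivative
            pd i F (u + s *\<^sub>R axis i 1 + t *\<^sub>R axis j 1)) (at 0)"
    by (rule alg_deriv[OF assms])
  moreover have "(\<lambda>x. F ((u + s *\<^sub>R axis i 1 + t *\<^sub>R axis j 1) + x *\<^sub>R axis i 1)) =
                 (\<lambda>x. (\<lambda>s. F (u + s *\<^sub>R axis i 1 + t *\<^sub>R axis j 1)) (x + s))"
    by (rule ext) (simp add: algebra_simps scaleR_add_left)
  ultimately show ?thesis using DERIV_shift[of _ _ 0 s] by simp
qed

lemma line_deriv_j:
  assumes "open U" "alg U F" "u + s *\<^sub>R axis i 1 + t *\<^sub>R axis j 1 \<in> U"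
  shows "((\<lambda>t. F (u + s *\<^sub>R axis i 1 + t *\<^sub>R axis j 1)) has_real_derivative
            pd j F (u + s *\<^sub>R axis i 1 + t *\<^sub>R axis j 1)) (at t)"
proof -
  have "((\<lambda>x. F ((u + s *\<^sub>R axis i 1 + t *\<^sub>R axis j 1) + x *\<^sub>R axis j 1)) has_real_derivative
            pd j F (u + s *\<^sub>R axis i 1 + t *\<^sub>R axis j 1)) (at 0)"
    by (rule alg_deriv[OF assms])
  moreover have "(\<lambda>x. F ((u + s *\<^sub>R axis i 1 + t *\<^sub>R axis j 1) + x *\<^sub>R axis j 1)) =
                 (\<lambda>x. (\<lambda>t. F (u + s *\<^sub>R axis i 1 + t *\<^sub>R axis j 1)) (x + t))"
    by (rule ext) (simp add: algebra_simps scaleR_add_left)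
  ultimately show ?thesis using DERIV_shift[of _ _ 0 t] by simp
qed

lemma clairaut:
  assumes U: "open U" and f: "alg U f" and u: "u \<in> U"
  shows "pd i (pd j f) u = pd j (pd i f) u"
proof (rule ccontr)
  assume ne: "pd i (pd j f) u \<noteq> pd j (pd i f) u"
  define d where "d = \<bar>pd i (pd j f) u - pd j (pd i f) u\<bar>"
  have d: "d > 0" using ne unfolding d_def by simp
  let ?p = "\<lambda>s t. u + s *\<^sub>R axis i 1 + t *\<^sub>R axis j (1::real)"
  have fi: "alg U (pd i f)" and fj: "alg U (pd j f)" and fij: "alg U (pd i (pd j f))"
    and fji: "alg U (pd j (pd i f))" using f U by (auto intro: alg_pd)
  obtain e where e: "e > 0" "ball u e \<subseteq> U" using U u open_contains_ball by blast
  have c1: "isCont (pd i (pd j f)) u" using alg_cont[OF U fij] U u continuous_on_eq_continuous_at by blast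
  have c2: "isCont (pd j (pd i f)) u" using alg_cont[OF U fji] U u continuous_on_eq_continuous_at by blast
  obtain d1 where d1: "d1 > 0" "\<And>x. dist x u < d1 \<Longrightarrow> dist (pd i (pd j f) x) (pd i (pd j f) u) < d/2"
    using c1[unfolded continuous_at_eps_delta] d by (metis half_gt_zero)
  obtain d2 where d2: "d2 > 0" "\<And>x. dist x u < d2 \<Longrightarrow> dist (pd j (pd i f) x) (pd j (pd i f) u) < d/2"
    using c2[unfolded continuous_at_eps_delta] d by (metis half_gt_zero)
  define \<delta> where "\<delta> = min e (min d1 d2) / 3"
  have \<delta>: "\<delta> > 0" "2 * \<delta> < e" "2 * \<delta> < d1" "2 * \<delta> < d2" using e d1 d2 unfolding \<delta>_def by auto
  have inU: "?p s t \<in> U" and near: "dist (?p s t) u \<le> 2 * \<delta>" if "0 \<le> s" "s \<le> \<delta>" "0 \<le> t" "t \<le> \<delta>" for s t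
  proof -
    have "dist (?p s t) u = norm (s *\<^sub>R axis i (1::real) + t *\<^sub>R axis j 1)" by (simp add: dist_norm)
    also have "\<dots> \<le> norm (s *\<^sub>R axis i (1::real)) + norm (t *\<^sub>R axis j (1::real))" by (rule norm_triangle_ineq)
    also have "\<dots> = s + t" using that by simp
    finally show "dist (?p s t) u \<le> 2 * \<delta>" using that by simp
    then show "?p s t \<in> U" using \<delta> e by (auto simp: dist_commute)
  qed
  define \<Delta> where "\<Delta> = f (?p \<delta> \<delta>) - f (?p \<delta> 0) - f (?p 0 \<delta>) + f (?p 0 0)"
  obtain s1 where s1: "0 < s1" "s1 < \<delta>"
    "(f (?p \<delta> \<delta>) - f (?p \<delta> 0)) - (f (?p 0 \<delta>) - f (?p 0 0)) =
       (\<delta> - 0) * (pd i f (?p s1 \<delta>) - pd i f (?p s1 0))"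
  proof -
    have "\<exists>z. 0 < z \<and> z < \<delta> \<and> (\<lambda>s. f (?p s \<delta>) - f (?p s 0)) \<delta> - (\<lambda>s. f (?p s \<delta>) - f (?p s 0)) 0 =
       (\<delta> - 0) * (\<lambda>s. pd i f (?p s \<delta>) - pd i f (?p s 0)) z"
      by (rule MVT2[OF \<delta>(1)]) (intro DERIV_diff line_deriv_i[OF U f] inU; use \<delta> in simp)
    thus ?thesis using that by auto
  qed
  obtain t1 where t1: "0 < t1" "t1 < \<delta>"
    "pd i f (?p s1 \<delta>) - pd i f (?p s1 0) = (\<delta> - 0) * pd j (pd i f) (?p s1 t1)"
  proof -
    have "\<exists>z. 0 < z \<and> z < \<delta> \<and> (\<lambda>t. pd i f (?p s1 t)) \<delta> - (\<lambda>t. pd i f (?p s1 t)) 0 =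
       (\<delta> - 0) * (\<lambda>t. pd j (pd i f) (?p s1 t)) z"
      by (rule MVT2[OF \<delta>(1)]) (intro line_deriv_j[OF U fi] inU; use \<delta> s1 in simp)
    thus ?thesis using that by auto
  qed
  obtain t2 where t2: "0 < t2" "t2 < \<delta>"
    "(f (?p \<delta> \<delta>) - f (?p 0 \<delta>)) - (f (?p \<delta> 0) - f (?p 0 0)) =
       (\<delta> - 0) * (pd j f (?p \<delta> t2) - pd j f (?p 0 t2))"
  proof -
    have "\<exists>z. 0 < z \<and> z < \<delta> \<and> (\<lambda>t. f (?p \<delta> t) - f (?p 0 t)) \<delta> - (\<lambda>t. f (?p \<delta> t) - f (?p 0 t)) 0 =
       (\<delta> - 0) * (\<lambda>t. pd j f (?p \<delta> t) - pd j f (?p 0 t)) z"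
      by (rule MVT2[OF \<delta>(1)]) (intro DERIV_diff line_deriv_j[OF U f] inU; use \<delta> in simp)
    thus ?thesis using that by auto
  qed
  obtain s2 where s2: "0 < s2" "s2 < \<delta>"
    "pd j f (?p \<delta> t2) - pd j f (?p 0 t2) = (\<delta> - 0) * pd i (pd j f) (?p s2 t2)"
  proof -
    have "\<exists>z. 0 < z \<and> z < \<delta> \<and> (\<lambda>s. pd j f (?p s t2)) \<delta> - (\<lambda>s. pd j f (?p s t2)) 0 =
       (\<delta> - 0) * (\<lambda>s. pd i (pd j f) (?p s t2)) z"
      by (rule MVT2[OF \<delta>(1)]) (intro line_deriv_i[OF U fj] inU; use \<delta> t2 in simp)
    thus ?thesis using that by auto
  qed
  have "\<delta> * \<delta> * pd j (pd i f) (?p s1 t1) = \<delta> * \<delta> * pd i (pd j f) (?p s2 t2)"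
    using s1(3) t1(3) t2(3) s2(3) by (simp add: algebra_simps)
  hence eq: "pd j (pd i f) (?p s1 t1) = pd i (pd j f) (?p s2 t2)" using \<delta> by simp
  have n1: "dist (?p s1 t1) u < d2" using near[of s1 t1] s1 t1 \<delta> by simp
  have n2: "dist (?p s2 t2) u < d1" using near[of s2 t2] s2 t2 \<delta> by simp
  have "d \<le> dist (pd i (pd j f) (?p s2 t2)) (pd i (pd j f) u) + dist (pd j (pd i f) (?p s1 t1)) (pd j (pd i f) u)"
    unfolding d_def dist_real_def using eq by linarith
  also have "\<dots> < d/2 + d/2" using d1(2)[OF n2] d2(2)[OF n1] by linarith
  finally show False by simp
qed

definition ipr :: "real^'m^'m \<Rightarrow> (real^'m::finite) \<times> real \<Rightarrow> (real^'m) \<times> real \<Rightarrow> real" where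
  "ipr r x y = (\<Sum>a\<in>UNIV. \<Sum>b\<in>UNIV. r$a$b * fst x $ a * fst y $ b) + snd x * snd y"

lemma ipr_add_left: "ipr r (x + y) z = ipr r x z + ipr r y z"
  unfolding ipr_def by (simp add: algebra_simps sum.distrib)
lemma ipr_add_right: "ipr r z (x + y) = ipr r z x + ipr r z y"
  unfolding ipr_def by (simp add: algebra_simps sum.distrib)
lemma ipr_scale_left: "ipr r (c *\<^sub>R x) z = c * ipr r x z"
  unfolding ipr_def by (simp add: algebra_simps sum_distrib_left)
lemma ipr_scale_right: "ipr r z (c *\<^sub>R x) = c * ipr r z x"
  unfolding ipr_def by (simp add: algebra_simps sum_distrib_left)
lemma ipr_zero_left[simp]: "ipr r 0 z = 0" unfolding ipr_def by simp
lemma ipr_zero_right[simp]: "ipr r z 0 = 0" unfolding ipr_def by simp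
lemma ipr_neg_left: "ipr r (- x) z = - ipr r x z"
  using ipr_scale_left[of r "-1" x z] by simp
lemma ipr_diff_left: "ipr r (x - y) z = ipr r x z - ipr r y z"
  using ipr_add_left[of r x "-y" z] ipr_neg_left[of r y z] by simp
lemma ipr_neg_right: "ipr r z (- x) = - ipr r z x"
  using ipr_scale_right[of r z "-1" x] by simp
lemma ipr_diff_right: "ipr r z (x - y) = ipr r z x - ipr r z y"
  using ipr_add_right[of r z x "-y"] ipr_neg_right[of r z y] by simp
lemma ipr_sum_left: "ipr r (\<Sum>l\<in>S. x l) z = (\<Sum>l\<in>S. ipr r (x l) z)"
  by (induction S rule: infinite_finite_induct) (auto simp: ipr_add_left)
lemma ipr_sum_right: "ipr r z (\<Sum>l\<in>S. x l) = (\<Sum>l\<in>S. ipr r z (x l))"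
  by (induction S rule: infinite_finite_induct) (auto simp: ipr_add_right)

lemma ipr_sym:
  assumes "transpose r = r" shows "ipr r x y = ipr r y x"
proof -
  have rs: "r$a$b = r$b$a" for a b
    using assms unfolding transpose_def by (metis vec_lambda_beta)
  have "(\<Sum>a\<in>UNIV. \<Sum>b\<in>UNIV. r$a$b * fst x $ a * fst y $ b) =
        (\<Sum>b\<in>UNIV. \<Sum>a\<in>UNIV. r$a$b * fst x $ a * fst y $ b)" by (rule sum.swap)
  also have "\<dots> = (\<Sum>b\<in>UNIV. \<Sum>a\<in>UNIV. r$b$a * fst y $ b * fst x $ a)"
    by (simp add: rs mult.commute mult.left_commute)
  finally show ?thesis unfolding ipr_def by (simp add: mult.commute)
qed

lemma quad_inner: "(\<Sum>a\<in>UNIV. \<Sum>b\<in>UNIV. r$a$b * x $ a * y $ b) = x \<bullet> (r *v y)"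
  unfolding inner_vec_def matrix_vector_mult_def
  by (simp add: sum_distrib_left mult.commute mult.left_commute)

lemma ipr_pos:
  assumes pos: "\<forall>x. x \<noteq> 0 \<longrightarrow> 0 < x \<bullet> (r *v x)" and "z \<noteq> 0"
  shows "ipr r z z > 0"
proof -
  have nn: "0 \<le> fst z \<bullet> (r *v fst z)" using pos by (cases "fst z = 0") (auto intro: less_imp_le)
  show ?thesis
  proof (cases "fst z = 0")
    case True
    then have "snd z \<noteq> 0" using assms(2) by (cases z) (auto simp: zero_prod_def)
    then show ?thesis unfolding ipr_def quad_inner using nn by (simp add: True) (metis not_real_square_gt_zero)
  next
    case False
    then show ?thesis unfolding ipr_def quad_inner using pos by (simp add: add_pos_nonneg)
  qed
qed

definition vsm :: "(real^'m::finite) set \<Rightarrow> (real^'m \<Rightarrow> (real^'m) \<times> real) \<Rightarrow> bool" where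
  "vsm U F \<longleftrightarrow> (\<forall>a. alg U (\<lambda>u. fst (F u) $ a)) \<and> alg U (\<lambda>u. snd (F u))"

lemma dphi_fst[simp]: "fst (dphi F i u) $ a = pd i (\<lambda>v. fst (F v) $ a) u"
  unfolding dphi_def by simp
lemma dphi_snd[simp]: "snd (dphi F i u) = pd i (\<lambda>v. snd (F v)) u"
  unfolding dphi_def by simp

lemma vsm_D: "open U \<Longrightarrow> vsm U F \<Longrightarrow> vsm U (dphi F i)"
  unfolding vsm_def by (simp add: alg_pd)

lemma vsm_alg_fst: "vsm U F \<Longrightarrow> alg U (\<lambda>u. fst (F u) $ a)" unfolding vsm_def by blast
lemma vsm_alg_snd: "vsm U F \<Longrightarrow> alg U (\<lambda>u. snd (F u))" unfolding vsm_def by blast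

lemma alg_ipr:
  assumes "vsm U F" "vsm U G"
  shows "alg U (\<lambda>v. ipr r (F v) (G v))"
  unfolding ipr_def using assms
  by (intro alg.add alg_sum alg.mul alg.cnst vsm_alg_fst vsm_alg_snd) auto

lemma pd_ipr:
  assumes U: "open U" and F: "vsm U F" and G: "vsm U G" and u: "u \<in> U"
  shows "pd i (\<lambda>v. ipr r (F v) (G v)) u = ipr r (dphi F i u) (G u) + ipr r (F u) (dphi G i u)"
proof -
  have aF: "alg U (\<lambda>u. fst (F u) $ a)" for a using F by (rule vsm_alg_fst)
  have aG: "alg U (\<lambda>u. fst (G u) $ a)" for a using G by (rule vsm_alg_fst)
  have sF: "alg U (\<lambda>u. snd (F u))" using F by (rule vsm_alg_snd)
  have sG: "alg U (\<lambda>u. snd (G u))" using G by (rule vsm_alg_snd)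
  have t: "alg U (\<lambda>v. r$a$b * fst (F v) $ a * fst (G v) $ b)" for a b
    by (intro alg.mul alg.cnst aF aG)
  have t2: "alg U (\<lambda>v. r$a$b * fst (F v) $ a)" for a b
    by (intro alg.mul alg.cnst aF aG)
  have s: "alg U (\<lambda>v. \<Sum>b\<in>UNIV. r$a$b * fst (F v) $ a * fst (G v) $ b)" for a
    by (intro alg_sum t) auto
  have ss: "alg U (\<lambda>v. \<Sum>a\<in>UNIV. \<Sum>b\<in>UNIV. r$a$b * fst (F v) $ a * fst (G v) $ b)"
    by (intro alg_sum s) auto
  have "pd i (\<lambda>v. ipr r (F v) (G v)) u =
        pd i (\<lambda>v. \<Sum>a\<in>UNIV. \<Sum>b\<in>UNIV. r$a$b * fst (F v) $ a * fst (G v) $ b) u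
        + pd i (\<lambda>v. snd (F v) * snd (G v)) u"
    unfolding ipr_def by (rule pd_add[OF U ss alg.mul[OF sF sG] u])
  also have "pd i (\<lambda>v. \<Sum>a\<in>UNIV. \<Sum>b\<in>UNIV. r$a$b * fst (F v) $ a * fst (G v) $ b) u =
     (\<Sum>a\<in>UNIV. \<Sum>b\<in>UNIV. pd i (\<lambda>v. r$a$b * fst (F v) $ a * fst (G v) $ b) u)"
    by (simp add: pd_sum[OF U _ s u] pd_sum[OF U _ t u])
  also have "\<dots> = (\<Sum>a\<in>UNIV. \<Sum>b\<in>UNIV. r$a$b * pd i (\<lambda>v. fst (F v) $ a) u * fst (G u) $ b
                    + r$a$b * fst (F u) $ a * pd i (\<lambda>v. fst (G v) $ b) u)"
    by (simp add: pd_mul[OF U t2 aG u] pd_cmul[OF U aF u])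
  also have "pd i (\<lambda>v. snd (F v) * snd (G v)) u = pd i (\<lambda>v. snd (F v)) u * snd (G u) + snd (F u) * pd i (\<lambda>v. snd (G v)) u"
    by (rule pd_mul[OF U sF sG u])
  finally show ?thesis unfolding ipr_def by (simp add: sum.distrib algebra_simps)
qed

lemma vclairaut:
  assumes "open U" "vsm U G" "u \<in> U"
  shows "dphi (dphi G j) i u = dphi (dphi G i) j u"
proof -
  have "pd i (\<lambda>v. pd j (\<lambda>w. fst (G w) $ a) v) u = pd j (\<lambda>v. pd i (\<lambda>w. fst (G w) $ a) v) u" for a
    using clairaut[OF assms(1) vsm_alg_fst[OF assms(2)] assms(3)] by simp
  moreover have "pd i (\<lambda>v. pd j (\<lambda>w. snd (G w)) v) u = pd j (\<lambda>v. pd i (\<lambda>w. snd (G w)) v) u"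
    using clairaut[OF assms(1) vsm_alg_snd[OF assms(2)] assms(3)] by simp
  ultimately show ?thesis unfolding dphi_def by (simp add: vec_eq_iff)
qed

lemma minv_props:
  fixes A :: "real^'n::finite^'n"
  assumes "det A \<noteq> 0"
  shows "A ** matrix_inv A = mat 1" "matrix_inv A ** A = mat 1"
proof -
  have "invertible A" using assms invertible_det_nz by blast
  then obtain B where "A ** B = mat 1 \<and> B ** A = mat 1" unfolding invertible_def by blast
  hence "A ** matrix_inv A = mat 1 \<and> matrix_inv A ** A = mat 1"
    unfolding matrix_inv_def by (rule someI)
  thus "A ** matrix_inv A = mat 1" "matrix_inv A ** A = mat 1" by auto
qed

lemma minv_entry:
  fixes A :: "real^'n::finite^'n"
  assumes d: "det A \<noteq> 0"
  shows "matrix_inv A $ k $ l = det (\<chi> i j. if j = k then axis l 1 $ i else A$i$j) / det A"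
proof -
  have "A *v (matrix_inv A *v axis l 1) = axis l 1"
    by (simp add: matrix_vector_mul_assoc minv_props[OF d])
  hence "matrix_inv A *v axis l 1 = (\<chi> k. det(\<chi> i j. if j=k then axis l 1 $ i else A$i$j) / det A)"
    using cramer[OF d] by blast
  hence "(matrix_inv A *v axis l 1) $ k = det (\<chi> i j. if j = k then axis l 1 $ i else A$i$j) / det A"
    by simp
  moreover have "(matrix_inv A *v axis l 1) $ k = matrix_inv A $ k $ l"
    by (simp add: matrix_vector_mult_basis column_def)
  ultimately show ?thesis by simp
qed

lemma alg_det:
  assumes "\<And>i j. alg U (\<lambda>v. M v $ i $ j)"
  shows "alg U (\<lambda>v. det (M v :: real^'n::finite^'n))"
  unfolding det_def
  by (intro alg_sum alg.mul alg.cnst alg_prod assms finite_permutations) auto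

lemma alg_minv:
  assumes "\<And>i j. alg U (\<lambda>v. M v $ i $ j)" "\<forall>v\<in>U. det (M v :: real^'n::finite^'n) \<noteq> 0"
  shows "alg U (\<lambda>v. matrix_inv (M v) $ k $ l)"
proof (rule alg.cong)
  have e: "alg U (\<lambda>v. (\<chi> i j. if j = k then axis l 1 $ i else M v $i$j) $ i $ j)" for i j
    by (cases "j = k") (auto intro: alg.cnst assms)
  show "alg U (\<lambda>v. det (\<chi> i j. if j = k then axis l 1 $ i else M v $i$j) / det (M v))"
    using assms(2) by (intro alg_divide alg_det assms e)
  show "\<forall>v\<in>U. matrix_inv (M v) $ k $ l = det (\<chi> i j. if j = k then axis l 1 $ i else M v $i$j) / det (M v)"
    using assms(2) minv_entry by blast
qed

lemma minv_sum_right: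
  fixes A :: "real^'n::finite^'n"
  assumes "det A \<noteq> 0"
  shows "(\<Sum>m\<in>UNIV. A$i$m * matrix_inv A $ m $ j) = (if i = j then 1 else 0)"
  using arg_cong[OF minv_props(1)[OF assms], of "\<lambda>M. M $ i $ j"]
  by (simp add: matrix_matrix_mult_def mat_def)

lemma minv_sum_left:
  fixes A :: "real^'n::finite^'n"
  assumes "det A \<noteq> 0"
  shows "(\<Sum>m\<in>UNIV. matrix_inv A $ i $ m * A$m$j) = (if i = j then 1 else 0)"
  using arg_cong[OF minv_props(2)[OF assms], of "\<lambda>M. M $ i $ j"]
  by (simp add: matrix_matrix_mult_def mat_def)

lemma dphi_const: "dphi (\<lambda>v. w) i u = 0"
  unfolding dphi_def by (simp add: pd_const zero_prod_def vec_eq_iff)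

lemma vsm_const: "vsm U (\<lambda>v. w)"
  unfolding vsm_def by (auto intro: alg.cnst)

lemma pd_ipr_const:
  assumes U: "open U" and F: "vsm U F" and u: "u \<in> U"
  shows "pd i (\<lambda>v. ipr r (F v) w) u = ipr r (dphi F i u) w"
  using pd_ipr[OF U F vsm_const u, of i r] by (simp add: dphi_const)

lemma sum_inv_contract:
  fixes g A :: "'n::finite \<Rightarrow> 'n \<Rightarrow> real"
  assumes gs: "\<And>i j. g i j = g j i"
    and inv: "\<And>i j. (\<Sum>m\<in>UNIV. g i m * A m j) = (if i = j then 1 else 0)"
  shows "(\<Sum>l\<in>UNIV. (\<Sum>m'\<in>UNIV. A l m' * y m') * g l m) = y m"
proof -
  have "(\<Sum>l\<in>UNIV. (\<Sum>m'\<in>UNIV. A l m' * y m') * g l m) = (\<Sum>l\<in>UNIV. \<Sum>m'\<in>UNIV. A l m' * y m' * g l m)"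
    by (simp add: sum_distrib_right)
  also have "\<dots> = (\<Sum>m'\<in>UNIV. \<Sum>l\<in>UNIV. A l m' * y m' * g l m)" by (rule sum.swap)
  also have "\<dots> = (\<Sum>m'\<in>UNIV. y m' * (\<Sum>l\<in>UNIV. g m l * A l m'))"
    by (simp add: sum_distrib_left gs[of _ m] mult.commute mult.left_commute)
  also have "\<dots> = (\<Sum>m'\<in>UNIV. y m' * (if m = m' then 1 else 0))" by (simp add: inv)
  also have "\<dots> = y m" by (simp add: if_distrib cong: if_cong)
  finally show ?thesis .
qed

lemma pd_combo:
  fixes A B :: "'l::finite \<Rightarrow> real^'m::finite \<Rightarrow> real"
  assumes U: "open U" and u: "u \<in> U" and A: "\<And>l. alg U (A l)" and B: "\<And>l. alg U (B l)"
    and C: "alg U C" and E: "alg U E"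
  shows "pd j (\<lambda>v. (\<Sum>l\<in>UNIV. A l v * B l v) - k * (C v * E v)) u =
    (\<Sum>l\<in>UNIV. pd j (A l) u * B l u + A l u * pd j (B l) u) - k * (pd j C u * E u + C u * pd j E u)"
proof -
  have s: "alg U (\<lambda>v. \<Sum>l\<in>UNIV. A l v * B l v)" by (intro alg_sum alg.mul A B) auto
  have ce: "alg U (\<lambda>v. C v * E v)" by (intro alg.mul C E)
  have "pd j (\<lambda>v. (\<Sum>l\<in>UNIV. A l v * B l v) - k * (C v * E v)) u =
        pd j (\<lambda>v. \<Sum>l\<in>UNIV. A l v * B l v) u - pd j (\<lambda>v. k * (C v * E v)) u"
    by (rule pd_diff[OF U s alg_cmul[OF ce] u])
  also have "pd j (\<lambda>v. \<Sum>l\<in>UNIV. A l v * B l v) u = (\<Sum>l\<in>UNIV. pd j (\<lambda>v. A l v * B l v) u)"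
    by (rule pd_sum[OF U]) (auto intro: alg.mul A B u)
  also have "\<dots> = (\<Sum>l\<in>UNIV. pd j (A l) u * B l u + A l u * pd j (B l) u)"
    by (rule sum.cong[OF refl]) (rule pd_mul[OF U A B u])
  also have "pd j (\<lambda>v. k * (C v * E v)) u = k * pd j (\<lambda>v. C v * E v) u"
    by (rule pd_cmul[OF U ce u])
  also have "pd j (\<lambda>v. C v * E v) u = pd j C u * E u + C u * pd j E u"
    by (rule pd_mul[OF U C E u])
  finally show ?thesis .
qed

lemma gauss:
  fixes F :: "real^'m::finite \<Rightarrow> (real^'m) \<times> real" and gm :: "'m \<Rightarrow> 'm \<Rightarrow> real^'m \<Rightarrow> real"
  assumes U: "open U" and u: "u \<in> U" and sym: "transpose r = r"
    and pos: "\<forall>x. x \<noteq> 0 \<longrightarrow> 0 < x \<bullet> (r *v x)"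
    and F: "vsm U F" and c: "c \<noteq> 0" and Fc: "\<forall>v\<in>U. ipr r (F v) (F v) = c"
    and gm: "\<forall>v\<in>U. \<forall>i j. gm i j v = ipr r (dphi F i v) (dphi F j v)"
    and det: "\<forall>v\<in>U. det (\<chi> i j. gm i j v) \<noteq> 0"
  shows "Riem gm l i j k u = (1/c) * (gm l j u * gm i k u - gm l k u * gm i j u)"
proof -
  have F1: "vsm U (dphi F i)" for i using vsm_D[OF U F] .
  have F2: "vsm U (dphi (dphi F j) i)" for i j using vsm_D[OF U F1] .
  have ips: "ipr r x y = ipr r y x" for x y using ipr_sym[OF sym] .
  have gs: "gm i j v = gm j i v" if "v \<in> U" for i j v using gm that ips by metis
  have ga: "alg U (gm i j)" for i j
    by (rule alg.cong[OF alg_ipr[OF F1 F1, of r i j]]) (use gm in auto)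
  have S2: "dphi (dphi F j) i v = dphi (dphi F i) j v" if "v \<in> U" for i j v
    using vclairaut[OF U F that] .
  have pdg: "pd k (gm i j) v = ipr r (dphi (dphi F i) k v) (dphi F j v) + ipr r (dphi F i v) (dphi (dphi F j) k v)"
    if "v \<in> U" for i j k v
  proof -
    have "pd k (gm i j) v = pd k (\<lambda>w. ipr r (dphi F i w) (dphi F j w)) v"
      using gm by (intro pd_local[OF U that]) auto
    also have "\<dots> = ipr r (dphi (dphi F i) k v) (dphi F j v) + ipr r (dphi F i v) (dphi (dphi F j) k v)"
      by (rule pd_ipr[OF U F1 F1 that])
    finally show ?thesis .
  qed
  have o1: "ipr r (dphi F i v) (F v) = 0" if "v \<in> U" for i v
  proof -
    have "pd i (\<lambda>w. ipr r (F w) (F w)) v = 0" using Fc by (intro pd_const_on[OF U that])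
    moreover have "pd i (\<lambda>w. ipr r (F w) (F w)) v = ipr r (dphi F i v) (F v) + ipr r (F v) (dphi F i v)"
      by (rule pd_ipr[OF U F F that])
    ultimately show ?thesis using ips[of "F v" "dphi F i v"] by simp
  qed
  have o1': "ipr r (F v) (dphi F i v) = 0" if "v \<in> U" for i v using o1[OF that] ips by metis
  have o2: "ipr r (dphi (dphi F j) i v) (F v) = - gm i j v" if "v \<in> U" for i j v
  proof -
    have "pd i (\<lambda>w. ipr r (dphi F j w) (F w)) v = 0" using o1 by (intro pd_const_on[OF U that]) auto
    moreover have "pd i (\<lambda>w. ipr r (dphi F j w) (F w)) v = ipr r (dphi (dphi F j) i v) (F v) + ipr r (dphi F j v) (dphi F i v)"
      by (rule pd_ipr[OF U F1 F that])
    ultimately show ?thesis using gm that gs[OF that, of i j] by simp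
  qed
  have G1: "Gam1 gm k i j v = ipr r (dphi (dphi F j) i v) (dphi F k v)" if v: "v \<in> U" for k i j v
  proof -
    have "pd i (gm j k) v = ipr r (dphi (dphi F j) i v) (dphi F k v) + ipr r (dphi F j v) (dphi (dphi F k) i v)"
      by (rule pdg[OF v])
    moreover have "pd j (gm i k) v = ipr r (dphi (dphi F i) j v) (dphi F k v) + ipr r (dphi F i v) (dphi (dphi F k) j v)"
      by (rule pdg[OF v])
    moreover have "pd k (gm i j) v = ipr r (dphi (dphi F i) k v) (dphi F j v) + ipr r (dphi F i v) (dphi (dphi F j) k v)"
      by (rule pdg[OF v])
    moreover have "dphi (dphi F i) j v = dphi (dphi F j) i v" using S2[OF v] by metis
    moreover have "dphi (dphi F i) k v = dphi (dphi F k) i v" using S2[OF v] by metis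
    moreover have "dphi (dphi F k) j v = dphi (dphi F j) k v" using S2[OF v] by metis
    moreover have "ipr r (dphi F j v) (dphi (dphi F k) i v) = ipr r (dphi (dphi F k) i v) (dphi F j v)" by (rule ips)
    ultimately show ?thesis unfolding Gam1_def by simp
  qed
  have G1a: "alg U (Gam1 gm k i j)" for k i j
  proof (rule alg.cong)
    show "alg U (\<lambda>v. (1/2) * (pd i (gm j k) v + pd j (gm i k) v - pd k (gm i j) v))"
      by (intro alg_cmul alg_diff alg.add alg_pd[OF U] ga)
    show "\<forall>v\<in>U. Gam1 gm k i j v = (1/2) * (pd i (gm j k) v + pd j (gm i k) v - pd k (gm i j) v)"
      unfolding Gam1_def by simp
  qed
  have gia: "alg U (\<lambda>v. ginv gm v $ a $ b)" for a b
    unfolding ginv_def by (rule alg_minv) (use det ga in auto)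
  have G2a: "alg U (Gam2 gm l i j)" for l i j
  proof (rule alg.cong)
    show "alg U (\<lambda>v. \<Sum>m\<in>UNIV. ginv gm v $ l $ m * Gam1 gm m i j v)"
      by (intro alg_sum alg.mul gia G1a) auto
    show "\<forall>v\<in>U. Gam2 gm l i j v = (\<Sum>m\<in>UNIV. ginv gm v $ l $ m * Gam1 gm m i j v)"
      unfolding Gam2_def by simp
  qed
  have inv1: "(\<Sum>m\<in>UNIV. gm i m v * ginv gm v $ m $ j) = (if i = j then 1 else 0)" if "v \<in> U" for i j v
    using minv_sum_right[of "\<chi> i j. gm i j v" i j] det that unfolding ginv_def by simp
  have D9: "dphi (dphi F i) k v = (\<Sum>l\<in>UNIV. Gam2 gm l k i v *\<^sub>R dphi F l v) - (gm k i v / c) *\<^sub>R F v"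
    if v: "v \<in> U" for i k v
  proof -
    define T where "T = dphi (dphi F i) k v - ((\<Sum>l\<in>UNIV. Gam2 gm l k i v *\<^sub>R dphi F l v) - (gm k i v / c) *\<^sub>R F v)"
    have orth_m: "ipr r T (dphi F m v) = 0" for m
    proof -
      have "ipr r (\<Sum>l\<in>UNIV. Gam2 gm l k i v *\<^sub>R dphi F l v) (dphi F m v) = (\<Sum>l\<in>UNIV. Gam2 gm l k i v * gm l m v)"
        by (simp add: ipr_sum_left ipr_scale_left gm v)
      also have "\<dots> = (\<Sum>l\<in>UNIV. (\<Sum>m'\<in>UNIV. ginv gm v $ l $ m' * Gam1 gm m' k i v) * gm l m v)"
        unfolding Gam2_def ..
      also have "\<dots> = Gam1 gm m k i v"
        by (rule sum_inv_contract[where g = "\<lambda>a b. gm a b v"]) (use gs[OF v] inv1[OF v] in auto)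
      also have "\<dots> = ipr r (dphi (dphi F i) k v) (dphi F m v)" by (rule G1[OF v])
      finally have "ipr r (\<Sum>l\<in>UNIV. Gam2 gm l k i v *\<^sub>R dphi F l v) (dphi F m v) = ipr r (dphi (dphi F i) k v) (dphi F m v)" .
      thus ?thesis unfolding T_def using o1'[OF v, of m]
        by (simp add: ipr_diff_left ipr_scale_left)
    qed
    have orth_F: "ipr r T (F v) = 0"
      unfolding T_def using o2[OF v, of i k] o1[OF v] Fc v c
      by (simp add: ipr_diff_left ipr_scale_left ipr_sum_left)
    define L where "L = (\<lambda>x::(real^'m) \<times> real. (\<Sum>l\<in>UNIV. fst x $ l *\<^sub>R dphi F l v) + snd x *\<^sub>R F v)"
    have linL: "linear L"
      unfolding L_def by (rule linearI) (simp_all add: scaleR_add_left sum.distrib scaleR_sum_right algebra_simps)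
    have injL: "inj L"
      unfolding linear_injective_0[OF linL]
    proof (intro allI impI)
      fix x assume x0: "L x = 0"
      have "ipr r (L x) (F v) = snd x * c"
        unfolding L_def using o1[OF v] Fc v by (simp add: ipr_add_left ipr_sum_left ipr_scale_left)
      hence a0: "snd x = 0" using x0 c by simp
      have "(\<Sum>l\<in>UNIV. fst x $ l * gm l m v) = 0" for m
      proof -
        have "ipr r (L x) (dphi F m v) = (\<Sum>l\<in>UNIV. fst x $ l * gm l m v)"
          unfolding L_def using a0 gm v by (simp add: ipr_add_left ipr_sum_left ipr_scale_left)
        thus ?thesis using x0 by simp
      qed
      hence "(\<chi> i j. gm i j v) *v fst x = 0"
        using gs[OF v] by (simp add: matrix_vector_mult_def vec_eq_iff mult.commute)
      moreover have "inj ((*v) (\<chi> i j. gm i j v))"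
        using det v invertible_det_nz inj_matrix_vector_mult by blast
      ultimately have "fst x = 0" by (metis matrix_vector_mult_0_right injD)
      with a0 show "x = 0" by (simp add: prod_eq_iff)
    qed
    have "surj L" using linear_injective_imp_surjective[OF linL injL] by simp
    then obtain x where x: "T = L x" by blast
    have "ipr r T (L x) = (\<Sum>l\<in>UNIV. fst x $ l * ipr r T (dphi F l v)) + snd x * ipr r T (F v)"
      unfolding L_def by (simp add: ipr_add_right ipr_sum_right ipr_scale_right)
    hence "ipr r T T = 0" using orth_m orth_F x by simp
    hence "T = 0" using ipr_pos[OF pos] by (metis less_irrefl)
    thus ?thesis unfolding T_def by simp
  qed
  have X: "ipr r (dphi (dphi (dphi F i) k) j u) (dphi F m u) =
     (\<Sum>l\<in>UNIV. pd j (Gam2 gm l k i) u * gm l m u + Gam2 gm l k i u * (\<Sum>s\<in>UNIV. Gam2 gm s j l u * gm s m u))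
     - (1/c) * (gm k i u * gm j m u)" for i k j m
  proof -
    define w where "w = dphi F m u"
    have a1: "alg U (\<lambda>v. ipr r (dphi F l v) w)" for l using alg_ipr[OF F1 vsm_const] .
    have a2: "alg U (\<lambda>v. ipr r (F v) w)" using alg_ipr[OF F vsm_const] .
    have "ipr r (dphi (dphi (dphi F i) k) j u) w = pd j (\<lambda>v. ipr r (dphi (dphi F i) k v) w) u"
      by (rule pd_ipr_const[OF U F2 u, symmetric])
    also have "\<dots> = pd j (\<lambda>v. (\<Sum>l\<in>UNIV. Gam2 gm l k i v * ipr r (dphi F l v) w) - (1/c) * (gm k i v * ipr r (F v) w)) u"
      by (rule pd_local[OF U u]) (simp add: D9 ipr_diff_left ipr_sum_left ipr_scale_left)
    also have "\<dots> = (\<Sum>l\<in>UNIV. pd j (Gam2 gm l k i) u * ipr r (dphi F l u) w + Gam2 gm l k i u * pd j (\<lambda>v. ipr r (dphi F l v) w) u)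
        - (1/c) * (pd j (gm k i) u * ipr r (F u) w + gm k i u * pd j (\<lambda>v. ipr r (F v) w) u)"
      by (rule pd_combo[OF U u G2a a1 ga a2])
    also have "\<dots> = (\<Sum>l\<in>UNIV. pd j (Gam2 gm l k i) u * gm l m u + Gam2 gm l k i u * (\<Sum>s\<in>UNIV. Gam2 gm s j l u * gm s m u))
     - (1/c) * (gm k i u * gm j m u)"
    proof -
      have "pd j (\<lambda>v. ipr r (dphi F l v) w) u = (\<Sum>s\<in>UNIV. Gam2 gm s j l u * gm s m u)" for l
      proof -
        have "pd j (\<lambda>v. ipr r (dphi F l v) w) u = ipr r (dphi (dphi F l) j u) w"
          by (rule pd_ipr_const[OF U F1 u])
        also have "\<dots> = (\<Sum>s\<in>UNIV. Gam2 gm s j l u * gm s m u)"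
          unfolding D9[OF u] w_def using o1'[OF u, of m] gm u
          by (simp add: ipr_diff_left ipr_sum_left ipr_scale_left)
        finally show ?thesis .
      qed
      moreover have "pd j (\<lambda>v. ipr r (F v) w) u = gm j m u"
        using pd_ipr_const[OF U F u, of j r w] gm u unfolding w_def by simp
      moreover have "ipr r (F u) w = 0" unfolding w_def by (rule o1'[OF u])
      moreover have "ipr r (dphi F l u) w = gm l m u" for l unfolding w_def using gm u by simp
      ultimately show ?thesis by simp
    qed
    finally show ?thesis unfolding w_def .
  qed
  have sw: "(\<Sum>l\<in>UNIV. Gam2 gm l k i u * (\<Sum>s\<in>UNIV. Gam2 gm s j l u * gm s m u)) =
            (\<Sum>l\<in>UNIV. \<Sum>s\<in>UNIV. Gam2 gm l j s u * Gam2 gm s k i u * gm l m u)" for i j k m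
  proof -
    have "(\<Sum>l\<in>UNIV. Gam2 gm l k i u * (\<Sum>s\<in>UNIV. Gam2 gm s j l u * gm s m u)) =
          (\<Sum>l\<in>UNIV. \<Sum>s\<in>UNIV. Gam2 gm l k i u * Gam2 gm s j l u * gm s m u)"
      by (simp add: sum_distrib_left mult.assoc)
    also have "\<dots> = (\<Sum>s\<in>UNIV. \<Sum>l\<in>UNIV. Gam2 gm l k i u * Gam2 gm s j l u * gm s m u)"
      by (rule sum.swap)
    finally show ?thesis by (simp add: mult.commute mult.left_commute)
  qed
  have Y: "(\<Sum>l\<in>UNIV. Riem_up gm l i j k u * gm l m u) = (1/c) * (gm k i u * gm j m u - gm j i u * gm k m u)" for i j k m
  proof -
    have eq3: "dphi (dphi (dphi F i) k) j u = dphi (dphi (dphi F i) j) k u"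
      using vclairaut[OF U F1 u] by metis
    have ex: "(\<Sum>l\<in>UNIV. Riem_up gm l i j k u * gm l m u) =
      (\<Sum>l\<in>UNIV. pd j (Gam2 gm l k i) u * gm l m u) - (\<Sum>l\<in>UNIV. pd k (Gam2 gm l j i) u * gm l m u)
      + (\<Sum>l\<in>UNIV. \<Sum>s\<in>UNIV. Gam2 gm l j s u * Gam2 gm s k i u * gm l m u)
      - (\<Sum>l\<in>UNIV. \<Sum>s\<in>UNIV. Gam2 gm l k s u * Gam2 gm s j i u * gm l m u)"
      unfolding Riem_up_def by (simp add: algebra_simps sum.distrib sum_subtractf sum_distrib_right sum_distrib_left)

    have X1: "ipr r (dphi (dphi (dphi F i) k) j u) (dphi F m u) =
       (\<Sum>l\<in>UNIV. pd j (Gam2 gm l k i) u * gm l m u) + (\<Sum>l\<in>UNIV. \<Sum>s\<in>UNIV. Gam2 gm l j s u * Gam2 gm s k i u * gm l m u)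
       - (1/c) * (gm k i u * gm j m u)"
      unfolding X[of i k j m] sum.distrib sw by simp
    have X2: "ipr r (dphi (dphi (dphi F i) j) k u) (dphi F m u) =
       (\<Sum>l\<in>UNIV. pd k (Gam2 gm l j i) u * gm l m u) + (\<Sum>l\<in>UNIV. \<Sum>s\<in>UNIV. Gam2 gm l k s u * Gam2 gm s j i u * gm l m u)
       - (1/c) * (gm j i u * gm k m u)"
      unfolding X[of i j k m] sum.distrib sw by simp
    show ?thesis using X1 X2 eq3 ex by (simp add: algebra_simps)
  qed
  have "Riem gm l i j k u = (\<Sum>m\<in>UNIV. Riem_up gm m i j k u * gm m l u)"
    unfolding Riem_def using gs[OF u] by (simp add: mult.commute)
  also have "\<dots> = (1/c) * (gm k i u * gm j l u - gm j i u * gm k l u)" by (rule Y)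
  finally show ?thesis using gs[OF u] by (simp add: algebra_simps)
qed

lemma key_alg:
  fixes q Z Zy Zw g h qy qw :: real
  assumes q: "q > 0" and B: "B = Z^2 - g*q*Z + q^2" "B \<noteq> 0" and h: "h^2 = 1 - g^2/4"
    and ty: "(Z - g*q)*Zy + q*qy = 0" and tw: "(Z - g*q)*Zw + q*qw = 0"
    and By: "By = 2*Z*Zy-g*(qy*Z+q*Zy)+2*q*qy" and Bw: "Bw = 2*Z*Zw-g*(qw*Z+q*Zw)+2*q*qw"
    and A: "A = Z - g*q/2" and Ay: "Ay = Zy-g*qy/2" and Aw: "Aw = Zw-g*qw/2"
    and h0: "h \<noteq> 0"
  shows "(Zy-g*qy)*Zw = -(Bw/(2*B))*q*qy-(By/(2*B))*q*qw+(By/(2*B))*(Bw/(2*B))*q*q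
          +(Ay-(By/(2*B))*A)*(Aw-(Bw/(2*B))*A)/h^2"
proof -
  have qy: "qy = -(Z - g*q)*Zy/q" using ty q by (simp add: field_simps, (simp add: algebra_simps)?)
  have qw: "qw = -(Z - g*q)*Zw/q" using tw q by (simp add: field_simps, (simp add: algebra_simps)?)
  have ky: "By/(2*B) = g*Zy/(2*q)"
  proof -
    have "By = g*Zy*B/q" unfolding By qy B(1) using q by (simp add: field_simps power2_eq_square, (simp add: algebra_simps)?)
    thus ?thesis using B(2) q by (simp add: field_simps)
  qed
  have kw: "Bw/(2*B) = g*Zw/(2*q)"
  proof -
    have "Bw = g*Zw*B/q" unfolding Bw qw B(1) using q by (simp add: field_simps power2_eq_square, (simp add: algebra_simps)?)
    thus ?thesis using B(2) q by (simp add: field_simps)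
  qed
  have a1: "Ay-(By/(2*B))*A = h^2 * Zy" unfolding ky Ay A qy h using q by (simp add: field_simps power2_eq_square, (simp add: algebra_simps)?)
  have a2: "Aw-(Bw/(2*B))*A = h^2 * Zw" unfolding kw Aw A qw h using q by (simp add: field_simps power2_eq_square, (simp add: algebra_simps)?)
  have hh: "h^2 * Zy * (h^2 * Zw) / h^2 = h^2 * Zy * Zw" using h0 by (simp add: field_simps power2_eq_square)
  show ?thesis unfolding a1 a2 hh unfolding ky kw using h0 q unfolding qy qw h
    by (simp add: field_simps power2_eq_square, (simp add: algebra_simps)?)
qed

lemma scal_FH2e:
  fixes qq z :: "real \<Rightarrow> real"
  assumes qd: "(qq has_real_derivative q') (at t0)" and zd: "(z has_real_derivative z') (at t0)"
    and q0: "qq t0 > 0" and h0: "h > 0" and hsq: "h^2 = 1 - g^2/4" and G: "G = g / h"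
  shows "((\<lambda>t. (z t ^ 2 - g * qq t * z t + qq t ^ 2) * exp (- G * arctan ((z t - g * qq t / 2) / (h * qq t))))
     has_real_derivative 2 * exp (- G * arctan ((z t0 - g * qq t0 / 2) / (h * qq t0))) * ((z t0 - g * qq t0) * z' + qq t0 * q')) (at t0)"
proof -
  define q where "q = qq t0"
  define Z where "Z = z t0"
  define u where "u = (Z - g * q / 2) / (h * q)"
  define E where "E = exp (- G * arctan u)"
  define B where "B = Z^2 - g*q*Z + q^2"
  have q: "q > 0" using q0 q_def by simp
  have Bq: "B = (Z - g*q/2)^2 + h^2 * q^2" unfolding B_def hsq by (simp add: power2_eq_square algebra_simps)
  have Bpos: "B > 0" unfolding Bq using q h0 by (simp add: add_nonneg_pos)
  have u1: "1 + u^2 = B / (h^2 * q^2)" unfolding u_def Bq using q h0 by (simp add: field_simps power2_eq_square)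
  have ud: "((\<lambda>t. (z t - g * qq t / 2) / (h * qq t)) has_real_derivative
      ((z' - g * q' / 2) * (h * q) - (Z - g * q / 2) * (h * q')) / (h * q)^2) (at t0)"
    using qd zd q h0 unfolding q_def Z_def
    by (auto intro!: derivative_eq_intros simp: power2_eq_square field_simps)
  have at: "((\<lambda>t. arctan ((z t - g * qq t / 2) / (h * qq t))) has_real_derivative
      inverse (1 + u^2) * (((z' - g * q' / 2) * (h * q) - (Z - g * q / 2) * (h * q')) / (h * q)^2)) (at t0)"
    using DERIV_chain2[OF DERIV_arctan ud] unfolding u_def q_def Z_def .
  have ed: "((\<lambda>t. exp (- G * arctan ((z t - g * qq t / 2) / (h * qq t)))) has_real_derivative
      E * (- G * (inverse (1 + u^2) * (((z' - g * q' / 2) * (h * q) - (Z - g * q / 2) * (h * q')) / (h * q)^2)))) (at t0)"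
    using DERIV_chain2[OF DERIV_exp DERIV_cmult[OF at, of "- G"]] unfolding E_def u_def q_def Z_def .
  have bd: "((\<lambda>t. z t ^ 2 - g * qq t * z t + qq t ^ 2) has_real_derivative (2 * Z * z' - g * (q' * Z + q * z') + 2 * q * q')) (at t0)"
    using qd zd unfolding q_def Z_def by (auto intro!: derivative_eq_intros simp: algebra_simps power2_eq_square)
  have "((\<lambda>t. (z t ^ 2 - g * qq t * z t + qq t ^ 2) * exp (- G * arctan ((z t - g * qq t / 2) / (h * qq t))))
     has_real_derivative (2 * Z * z' - g * (q' * Z + q * z') + 2 * q * q') * E
        + B * (E * (- G * (inverse (1 + u^2) * (((z' - g * q' / 2) * (h * q) - (Z - g * q / 2) * (h * q')) / (h * q)^2))))) (at t0)"
    using DERIV_mult[OF bd ed] unfolding E_def B_def u_def q_def Z_def by (simp add: algebra_simps)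
  moreover have "(2 * Z * z' - g * (q' * Z + q * z') + 2 * q * q') * E
        + B * (E * (- G * (inverse (1 + u^2) * (((z' - g * q' / 2) * (h * q) - (Z - g * q / 2) * (h * q')) / (h * q)^2))))
      = 2 * E * ((Z - g * q) * z' + q * q')"
  proof -
    have bi: "B * inverse (1 + u^2) = h^2 * q^2" unfolding u1 using Bpos q h0 by (simp add: field_simps)
    have "B * (E * (- G * (inverse (1 + u^2) * (((z' - g * q' / 2) * (h * q) - (Z - g * q / 2) * (h * q')) / (h * q)^2))))
         = E * (- G * (B * inverse (1 + u^2)) * (((z' - g * q' / 2) * (h * q) - (Z - g * q / 2) * (h * q')) / (h * q)^2))"
      by (simp add: ac_simps)
    also have "\<dots> = E * (- G * (h^2 * q^2) * (((z' - g * q' / 2) * (h * q) - (Z - g * q / 2) * (h * q')) / (h * q)^2))"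
      unfolding bi ..
    also have "\<dots> = E * (- g * ((z' - g * q' / 2) * q - (Z - g * q / 2) * q'))"
      unfolding G using h0 q by (simp add: field_simps power2_eq_square)
    finally show ?thesis by (simp add: algebra_simps)
  qed
  ultimately show ?thesis unfolding E_def u_def q_def Z_def by simp
qed

lemma scal_E:
  fixes qq z :: "real \<Rightarrow> real"
  assumes qd: "(qq has_real_derivative q') (at t0)" and zd: "(z has_real_derivative z') (at t0)"
    and q0: "qq t0 > 0" and h0: "h > 0" and hsq: "h^2 = 1 - g^2/4"
  shows "((\<lambda>t. exp (- G * arctan ((z t - g * qq t / 2) / (h * qq t)))) has_real_derivative
     exp (- G * arctan ((z t0 - g * qq t0 / 2) / (h * qq t0))) *
     (- G * (h * ((z' - g * q' / 2) * qq t0 - (z t0 - g * qq t0 / 2) * q') / (z t0 ^ 2 - g * qq t0 * z t0 + qq t0 ^ 2)))) (at t0)"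
proof -
  define q where "q = qq t0"
  define Z where "Z = z t0"
  define u where "u = (Z - g * q / 2) / (h * q)"
  define B where "B = Z^2 - g*q*Z + q^2"
  have q: "q > 0" using q0 q_def by simp
  have Bq: "B = (Z - g*q/2)^2 + h^2 * q^2" unfolding B_def hsq by (simp add: power2_eq_square algebra_simps)
  have Bpos: "B > 0" unfolding Bq using q h0 by (simp add: add_nonneg_pos)
  have u1: "1 + u^2 = B / (h^2 * q^2)" unfolding u_def Bq using q h0 by (simp add: field_simps power2_eq_square)
  have ud: "((\<lambda>t. (z t - g * qq t / 2) / (h * qq t)) has_real_derivative
      ((z' - g * q' / 2) * (h * q) - (Z - g * q / 2) * (h * q')) / (h * q)^2) (at t0)"
    using qd zd q h0 unfolding q_def Z_def
    by (auto intro!: derivative_eq_intros simp: power2_eq_square field_simps)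
  have at: "((\<lambda>t. arctan ((z t - g * qq t / 2) / (h * qq t))) has_real_derivative
      inverse (1 + u^2) * (((z' - g * q' / 2) * (h * q) - (Z - g * q / 2) * (h * q')) / (h * q)^2)) (at t0)"
    using DERIV_chain2[OF DERIV_arctan ud] unfolding u_def q_def Z_def .
  have "inverse (1 + u^2) * (((z' - g * q' / 2) * (h * q) - (Z - g * q / 2) * (h * q')) / (h * q)^2)
      = h * ((z' - g * q' / 2) * q - (Z - g * q / 2) * q') / B"
    unfolding u1 using q h0 Bpos by (simp add: field_simps power2_eq_square)
  with at have at': "((\<lambda>t. arctan ((z t - g * qq t / 2) / (h * qq t))) has_real_derivative
      h * ((z' - g * q' / 2) * q - (Z - g * q / 2) * q') / B) (at t0)" by simp
  show ?thesis
    using DERIV_chain2[OF DERIV_exp DERIV_cmult[OF at', of "- G"]] unfolding q_def Z_def B_def u_def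
    by (simp add: algebra_simps)
qed

lemma scal_D1:
  fixes qq z p :: "real \<Rightarrow> real"
  assumes qd: "(qq has_real_derivative q') (at t0)" and zd: "(z has_real_derivative z') (at t0)"
    and pd: "(p has_real_derivative p') (at t0)"
    and q0: "qq t0 > 0" and h0: "h > 0" and hsq: "h^2 = 1 - g^2/4"
  shows "((\<lambda>t. 2 * exp (- G * arctan ((z t - g * qq t / 2) / (h * qq t))) * ((z t - g * qq t) * Zw + p t))
     has_real_derivative
     2 * exp (- G * arctan ((z t0 - g * qq t0 / 2) / (h * qq t0))) *
     (- G * (h * ((z' - g * q' / 2) * qq t0 - (z t0 - g * qq t0 / 2) * q') / (z t0 ^ 2 - g * qq t0 * z t0 + qq t0 ^ 2))
        * ((z t0 - g * qq t0) * Zw + p t0) + ((z' - g * q') * Zw + p'))) (at t0)"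
proof -
  have e: "((\<lambda>t. 2 * exp (- G * arctan ((z t - g * qq t / 2) / (h * qq t)))) has_real_derivative
     2 * (exp (- G * arctan ((z t0 - g * qq t0 / 2) / (h * qq t0))) *
     (- G * (h * ((z' - g * q' / 2) * qq t0 - (z t0 - g * qq t0 / 2) * q') / (z t0 ^ 2 - g * qq t0 * z t0 + qq t0 ^ 2))))) (at t0)"
    by (rule DERIV_cmult[OF scal_E[OF qd zd q0 h0 hsq]])
  have l: "((\<lambda>t. (z t - g * qq t) * Zw + p t) has_real_derivative (z' - g * q') * Zw + p') (at t0)"
    using qd zd pd by (auto intro!: derivative_eq_intros)
  show ?thesis using DERIV_mult[OF e l] by (simp add: algebra_simps)
qed

definition blf :: "real^'m^'m \<Rightarrow> real^'m::finite \<Rightarrow> real^'m \<Rightarrow> real" where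
  "blf r X Y = (\<Sum>a\<in>UNIV. \<Sum>b\<in>UNIV. r$a$b * X$a * Y$b)"

lemma qhat_blf: "qhat r R = sqrt (blf r R R)" unfolding qhat_def blf_def ..
lemma ipr_blf: "ipr r x y = blf r (fst x) (fst y) + snd x * snd y" unfolding ipr_def blf_def ..

lemma blf_add_left: "blf r (X + Y) W = blf r X W + blf r Y W"
  unfolding blf_def by (simp add: algebra_simps sum.distrib)
lemma blf_add_right: "blf r W (X + Y) = blf r W X + blf r W Y"
  unfolding blf_def by (simp add: algebra_simps sum.distrib)
lemma blf_scale_left: "blf r (c *\<^sub>R X) W = c * blf r X W"
  unfolding blf_def by (simp add: algebra_simps sum_distrib_left)
lemma blf_scale_right: "blf r W (c *\<^sub>R X) = c * blf r W X"
  unfolding blf_def by (simp add: algebra_simps sum_distrib_left)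
lemma blf_diff_left: "blf r (X - Y) W = blf r X W - blf r Y W"
  using blf_add_left[of r X "-Y" W] blf_scale_left[of r "-1" Y W] by simp
lemma blf_diff_right: "blf r W (X - Y) = blf r W X - blf r W Y"
  using blf_add_right[of r W X "-Y"] blf_scale_right[of r W "-1" Y] by simp
lemma blf_sym: "transpose r = r \<Longrightarrow> blf r X Y = blf r Y X"
  using ipr_sym[of r "(X,0)" "(Y,0)"] unfolding ipr_blf by simp
lemma blf_zero_left[simp]: "blf r 0 Y = 0" unfolding blf_def by simp
lemma blf_sum_left: "blf r (\<Sum>l\<in>S. X l) W = (\<Sum>l\<in>S. blf r (X l) W)"
  by (induction S rule: infinite_finite_induct) (auto simp: blf_add_left)

lemma curve_blf_const:
  assumes d: "\<And>a. ((\<lambda>t. c t $ a) has_real_derivative d $ a) (at t0)"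
  shows "((\<lambda>t. blf r (c t) W) has_real_derivative blf r d W) (at t0)"
  unfolding blf_def
  by (intro DERIV_sum DERIV_cmult_right DERIV_cmult d)

lemma curve_blf_sq:
  assumes sym: "transpose r = r" and d: "\<And>a. ((\<lambda>t. c t $ a) has_real_derivative d $ a) (at t0)"
  shows "((\<lambda>t. blf r (c t) (c t)) has_real_derivative 2 * blf r (c t0) d) (at t0)"
proof -
  have "((\<lambda>t. blf r (c t) (c t)) has_real_derivative
      (\<Sum>a\<in>UNIV. \<Sum>b\<in>UNIV. r$a$b * d$a * c t0 $ b + d $ b * (r$a$b * c t0 $ a))) (at t0)"
    unfolding blf_def by (rule DERIV_sum, rule DERIV_sum, rule DERIV_mult, rule DERIV_cmult, rule d, rule d)
  moreover have "(\<Sum>a\<in>UNIV. \<Sum>b\<in>UNIV. r$a$b * d$a * c t0 $ b + d $ b * (r$a$b * c t0 $ a))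
     = blf r d (c t0) + blf r (c t0) d"
    unfolding blf_def sum.distrib by (simp add: mult_ac)
  ultimately have "((\<lambda>t. blf r (c t) (c t)) has_real_derivative blf r d (c t0) + blf r (c t0) d) (at t0)"
    by simp
  thus ?thesis using blf_sym[OF sym, of d "c t0"] by simp
qed

lemma curve_q:
  assumes sym: "transpose r = r" and d: "\<And>a. ((\<lambda>t. c t $ a) has_real_derivative d $ a) (at t0)"
    and q0: "qhat r (c t0) > 0"
  shows "((\<lambda>t. qhat r (c t)) has_real_derivative blf r (c t0) d / qhat r (c t0)) (at t0)"
proof -
  have p: "blf r (c t0) (c t0) > 0" using q0 unfolding qhat_blf by simp
  have der: "((\<lambda>t. sqrt (blf r (c t) (c t))) has_real_derivative inverse (sqrt (blf r (c t0) (c t0))) / 2 * (2 * blf r (c t0) d)) (at t0)"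
    by (rule DERIV_chain2[OF DERIV_real_sqrt[OF p] curve_blf_sq[OF sym d]])
  have eq: "inverse (sqrt (blf r (c t0) (c t0))) / 2 * (2 * blf r (c t0) d) = blf r (c t0) d / sqrt (blf r (c t0) (c t0))"
    by (simp add: inverse_eq_divide)
  show ?thesis using der[unfolded eq] unfolding qhat_blf .
qed

definition FE :: "real \<Rightarrow> real^'m^'m \<Rightarrow> (real^'m::finite) \<times> real \<Rightarrow> real" where
  "FE g r x = exp (- GG g * arctan (Ahat g r x / (hh g * qhat r (fst x))))"
definition FH2e :: "real \<Rightarrow> real^'m^'m \<Rightarrow> (real^'m::finite) \<times> real \<Rightarrow> real" where
  "FH2e g r x = Bhat g r x * FE g r x"
definition Tn :: "real \<Rightarrow> real^'m^'m \<Rightarrow> (real^'m::finite) \<times> real \<Rightarrow> (real^'m) \<times> real \<Rightarrow> real" where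
  "Tn g r x w = (snd x - g * qhat r (fst x)) * snd w + blf r (fst x) (fst w)"
definition D1 :: "real \<Rightarrow> real^'m^'m \<Rightarrow> (real^'m::finite) \<times> real \<Rightarrow> (real^'m) \<times> real \<Rightarrow> real" where
  "D1 g r x w = 2 * FE g r x * Tn g r x w"
definition D2 :: "real \<Rightarrow> real^'m^'m \<Rightarrow> (real^'m::finite) \<times> real \<Rightarrow> (real^'m) \<times> real \<Rightarrow> (real^'m) \<times> real \<Rightarrow> real" where
  "D2 g r x y w = (let q = qhat r (fst x); qy = blf r (fst x) (fst y) / q in
     2 * FE g r x * (- GG g * (hh g * ((snd y - g * qy / 2) * q - (snd x - g * q / 2) * qy) / (snd x ^ 2 - g * q * snd x + q ^ 2))
       * Tn g r x w + ((snd y - g * qy) * snd w + blf r (fst y) (fst w))))"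

lemma g_sq_lt: "-2 < g \<Longrightarrow> g < 2 \<Longrightarrow> (g::real)^2 < 4"
proof -
  assume "-2 < g" "g < 2"
  hence "(2 - g) * (2 + g) > 0" by (intro mult_pos_pos) auto
  moreover have "(2 - g) * (2 + g) = 4 - g^2" by (simp add: algebra_simps power2_eq_square)
  ultimately show ?thesis by simp
qed

lemma hh_pos: "-2 < g \<Longrightarrow> g < 2 \<Longrightarrow> hh g > 0"
  unfolding hh_def using g_sq_lt[of g] by simp

lemma hh_sq: "-2 < g \<Longrightarrow> g < 2 \<Longrightarrow> (hh g)^2 = 1 - g^2/4"
  unfolding hh_def using g_sq_lt[of g] by simp

lemma Bhat_eq: "-2 < g \<Longrightarrow> g < 2 \<Longrightarrow> Bhat g r x = (Ahat g r x)^2 + (hh g)^2 * (qhat r (fst x))^2"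
  by (unfold Bhat_def Ahat_def hh_sq) (simp add: power2_eq_square field_simps)

lemma Bhat_pos: "-2 < g \<Longrightarrow> g < 2 \<Longrightarrow> qhat r (fst x) > 0 \<Longrightarrow> Bhat g r x > 0"
  using Bhat_eq[of g r x] hh_pos[of g] by (simp add: add_nonneg_pos)

lemma FH_sq:
  assumes g: "-2 < g" "g < 2" and q: "qhat r (fst x) > 0"
  shows "(FH g r x)^2 = FH2e g r x"
proof -
  have B: "Bhat g r x \<ge> 0" using Bhat_pos[OF g q] by simp
  have "(FH g r x)^2 = Bhat g r x * (exp (- (1/2) * GG g * Phihat g r x))^2"
    unfolding FH_def Jhat_def using B by (simp add: power_mult_distrib)
  also have "(exp (- (1/2) * GG g * Phihat g r x))^2 = exp (- GG g * Phihat g r x)"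
    by (simp add: power2_eq_square exp_add[symmetric])
  finally show ?thesis unfolding FH2e_def FE_def Phihat_def using q by simp
qed

lemma curve_FH2e:
  assumes g: "-2 < g" "g < 2" and sym: "transpose r = r"
    and dR: "\<And>a. ((\<lambda>t. fst (c t) $ a) has_real_derivative fst d $ a) (at t0)"
    and dZ: "((\<lambda>t. snd (c t)) has_real_derivative snd d) (at t0)"
    and q0: "qhat r (fst (c t0)) > 0"
  shows "((\<lambda>t. FH2e g r (c t)) has_real_derivative D1 g r (c t0) d) (at t0)"
proof -
  have qd: "((\<lambda>t. qhat r (fst (c t))) has_real_derivative blf r (fst (c t0)) (fst d) / qhat r (fst (c t0))) (at t0)"
    by (rule curve_q[OF sym dR q0])
  from scal_FH2e[OF qd dZ q0 hh_pos[OF g] hh_sq[OF g], of "GG g"]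
  have "((\<lambda>t. FH2e g r (c t)) has_real_derivative
     2 * FE g r (c t0) * ((snd (c t0) - g * qhat r (fst (c t0))) * snd d + qhat r (fst (c t0)) * (blf r (fst (c t0)) (fst d) / qhat r (fst (c t0))))) (at t0)"
    unfolding FH2e_def FE_def Bhat_def Ahat_def GG_def by simp
  moreover have "qhat r (fst (c t0)) * (blf r (fst (c t0)) (fst d) / qhat r (fst (c t0))) = blf r (fst (c t0)) (fst d)"
    using q0 by simp
  ultimately show ?thesis unfolding D1_def Tn_def by simp
qed

lemma line_D1:
  assumes g: "-2 < g" "g < 2" and sym: "transpose r = r" and q0: "qhat r (fst x) > 0"
  shows "((\<lambda>s. D1 g r (x + s *\<^sub>R y) w) has_real_derivative D2 g r x y w) (at 0)"
proof -
  have cR: "((\<lambda>s. (fst x + s *\<^sub>R fst y) $ a) has_real_derivative fst y $ a) (at 0)" for a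
    by (auto intro!: derivative_eq_intros)
  have q00: "qhat r (fst x + 0 *\<^sub>R fst y) > 0" using q0 by simp
  have qd: "((\<lambda>s. qhat r (fst x + s *\<^sub>R fst y)) has_real_derivative blf r (fst x) (fst y) / qhat r (fst x)) (at 0)"
    using curve_q[OF sym cR q00] by simp
  have zd: "((\<lambda>s. snd x + s * snd y) has_real_derivative snd y) (at 0)"
    by (auto intro!: derivative_eq_intros)
  have pd: "((\<lambda>s. blf r (fst x + s *\<^sub>R fst y) (fst w)) has_real_derivative blf r (fst y) (fst w)) (at 0)"
    by (rule curve_blf_const[OF cR])
  from scal_D1[OF qd zd pd _ hh_pos[OF g] hh_sq[OF g], where G="GG g" and Zw="snd w"] q0
  have "((\<lambda>s. 2 * exp (- GG g * arctan ((snd x + s * snd y - g * qhat r (fst x + s *\<^sub>R fst y) / 2) / (hh g * qhat r (fst x + s *\<^sub>R fst y))))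
       * ((snd x + s * snd y - g * qhat r (fst x + s *\<^sub>R fst y)) * snd w + blf r (fst x + s *\<^sub>R fst y) (fst w)))
     has_real_derivative D2 g r x y w) (at 0)"
    unfolding D2_def Let_def FE_def Tn_def Ahat_def by simp
  moreover have "(\<lambda>s. D1 g r (x + s *\<^sub>R y) w) = (\<lambda>s. 2 * exp (- GG g * arctan ((snd x + s * snd y - g * qhat r (fst x + s *\<^sub>R fst y) / 2) / (hh g * qhat r (fst x + s *\<^sub>R fst y))))
       * ((snd x + s * snd y - g * qhat r (fst x + s *\<^sub>R fst y)) * snd w + blf r (fst x + s *\<^sub>R fst y) (fst w)))"
    unfolding D1_def FE_def Tn_def Ahat_def by simp
  ultimately show ?thesis by simp
qed

lemma open_qpos: "open {z::(real^'m::finite) \<times> real. 0 < qhat r (fst z)}"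
proof -
  have "continuous_on UNIV (\<lambda>z::(real^'m) \<times> real. qhat r (fst z))"
    unfolding qhat_def by (intro continuous_intros)
  thus ?thesis using open_Collect_less[of "\<lambda>z. 0" "\<lambda>z::(real^'m) \<times> real. qhat r (fst z)"]
    by (simp add: continuous_on_const)
qed

lemma hess_FH:
  assumes g: "-2 < g" "g < 2" and sym: "transpose r = r" and q: "qhat r (fst x) > 0"
  shows "hess2 (\<lambda>Rh. (FH g r Rh)^2) x y w = D2 g r x y w"
proof -
  have inner: "deriv (\<lambda>t. (FH g r (x + s *\<^sub>R y + t *\<^sub>R w))^2) 0 = D1 g r (x + s *\<^sub>R y) w"
    if s: "0 < qhat r (fst (x + s *\<^sub>R y))" for s
  proof -
    let ?c = "\<lambda>t. x + s *\<^sub>R y + t *\<^sub>R w"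
    have dR: "((\<lambda>t. fst (?c t) $ a) has_real_derivative fst w $ a) (at 0)" for a
      by (auto intro!: derivative_eq_intros)
    have dZ: "((\<lambda>t. snd (?c t)) has_real_derivative snd w) (at 0)"
      by (auto intro!: derivative_eq_intros)
    have d: "((\<lambda>t. FH2e g r (?c t)) has_real_derivative D1 g r (?c 0) w) (at 0)"
      by (rule curve_FH2e[OF g sym dR dZ]) (use s in simp)
    have ev: "eventually (\<lambda>t. FH2e g r (?c t) = (FH g r (?c t))^2) (nhds 0)"
      using ev_in_open[OF open_qpos[of r], where u="x + s *\<^sub>R y" and w=w] s by (auto elim!: eventually_mono simp: FH_sq[OF g])
    have "((\<lambda>t. (FH g r (?c t))^2) has_real_derivative D1 g r (?c 0) w) (at 0)"
      using d ev by (subst DERIV_cong_ev[symmetric]) auto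
    thus ?thesis by (simp add: DERIV_imp_deriv)
  qed
  have ev: "eventually (\<lambda>s. deriv (\<lambda>t. (FH g r (x + s *\<^sub>R y + t *\<^sub>R w))^2) 0 = D1 g r (x + s *\<^sub>R y) w) (nhds 0)"
    using ev_in_open[OF open_qpos[of r], where u=x and w=y] q by (auto elim!: eventually_mono simp: inner)
  have "deriv (\<lambda>s. deriv (\<lambda>t. (FH g r (x + s *\<^sub>R y + t *\<^sub>R w))^2) 0) 0 = deriv (\<lambda>s. D1 g r (x + s *\<^sub>R y) w) 0"
    by (rule deriv_cong_ev[OF ev refl])
  also have "\<dots> = D2 g r x y w" by (rule DERIV_imp_deriv[OF line_D1[OF g sym q]])
  finally show ?thesis unfolding hess2_def .
qed

definition Psi :: "real \<Rightarrow> real^'m^'m \<Rightarrow> (real^'m::finite) \<times> real \<Rightarrow> (real^'m) \<times> real" where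
  "Psi g r x = ((1 / sqrt (Bhat g r x)) *\<^sub>R fst x, Ahat g r x / (hh g * sqrt (Bhat g r x)))"

definition kk :: "real \<Rightarrow> real^'m^'m \<Rightarrow> (real^'m::finite) \<times> real \<Rightarrow> (real^'m) \<times> real \<Rightarrow> real" where
  "kk g r x y = (let q = qhat r (fst x); qy = blf r (fst x) (fst y) / q in
      (2 * snd x * snd y - g * (qy * snd x + q * snd y) + 2 * q * qy) / (2 * Bhat g r x))"

definition dPsi :: "real \<Rightarrow> real^'m^'m \<Rightarrow> (real^'m::finite) \<times> real \<Rightarrow> (real^'m) \<times> real \<Rightarrow> (real^'m) \<times> real" where
  "dPsi g r x y = ((1 / sqrt (Bhat g r x)) *\<^sub>R (fst y - kk g r x y *\<^sub>R fst x),
     (snd y - g * (blf r (fst x) (fst y) / qhat r (fst x)) / 2 - kk g r x y * Ahat g r x) / (hh g * sqrt (Bhat g r x)))"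

lemma curve_Psi:
  assumes g: "-2 < g" "g < 2" and sym: "transpose r = r"
    and dR: "\<And>a. ((\<lambda>t. fst (c t) $ a) has_real_derivative fst d $ a) (at t0)"
    and dZ: "((\<lambda>t. snd (c t)) has_real_derivative snd d) (at t0)"
    and q0: "qhat r (fst (c t0)) > 0"
  shows "((\<lambda>t. fst (Psi g r (c t)) $ a) has_real_derivative fst (dPsi g r (c t0) d) $ a) (at t0)"
    "((\<lambda>t. snd (Psi g r (c t))) has_real_derivative snd (dPsi g r (c t0) d)) (at t0)"
proof -
  define q where "q = qhat r (fst (c t0))"
  define qy where "qy = blf r (fst (c t0)) (fst d) / q"
  define B where "B = Bhat g r (c t0)"
  define By where "By = 2 * snd (c t0) * snd d - g * (qy * snd (c t0) + q * snd d) + 2 * q * qy"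
  have qd: "((\<lambda>t. qhat r (fst (c t))) has_real_derivative qy) (at t0)"
    using curve_q[OF sym dR q0] unfolding qy_def q_def .
  have Bp: "B > 0" unfolding B_def by (rule Bhat_pos[OF g q0])
  have Bd: "((\<lambda>t. Bhat g r (c t)) has_real_derivative By) (at t0)"
    unfolding Bhat_def By_def q_def
    by (rule derivative_eq_intros qd dZ refl | simp add: q_def)+ (simp add: algebra_simps)
  have sBd: "((\<lambda>t. sqrt (Bhat g r (c t))) has_real_derivative inverse (sqrt B) / 2 * By) (at t0)"
    using DERIV_chain2[OF DERIV_real_sqrt[OF Bp[unfolded B_def]] Bd] unfolding B_def .
  have sB: "sqrt B > 0" "sqrt B * sqrt B = B" using Bp by simp_all
  have kk: "kk g r (c t0) d = By / (2 * B)" unfolding kk_def Let_def By_def B_def qy_def q_def ..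
  have "((\<lambda>t. inverse (sqrt (Bhat g r (c t))) * fst (c t) $ a) has_real_derivative
      (- (inverse (sqrt B) / 2 * By * inverse (sqrt B ^ Suc (Suc 0)))) * fst (c t0) $ a + fst d $ a * inverse (sqrt B)) (at t0)"
    using DERIV_mult[OF DERIV_inverse_fun[OF sBd] dR[of a]] sB unfolding B_def by (simp add: algebra_simps)
  moreover have "(- (inverse (sqrt B) / 2 * By * inverse (sqrt B ^ Suc (Suc 0)))) * fst (c t0) $ a + fst d $ a * inverse (sqrt B)
      = fst (dPsi g r (c t0) d) $ a"
    unfolding dPsi_def kk B_def[symmetric] using sB Bp by (simp add: field_simps power2_eq_square)
  ultimately show "((\<lambda>t. fst (Psi g r (c t)) $ a) has_real_derivative fst (dPsi g r (c t0) d) $ a) (at t0)"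
    unfolding Psi_def by (simp add: inverse_eq_divide)
  have Ad: "((\<lambda>t. Ahat g r (c t)) has_real_derivative snd d - g * qy / 2) (at t0)"
    unfolding Ahat_def by (rule derivative_eq_intros qd dZ refl | simp)+
  have h: "hh g > 0" using hh_pos[OF g] .
  have "((\<lambda>t. Ahat g r (c t) * inverse (hh g * sqrt (Bhat g r (c t)))) has_real_derivative
      (snd d - g * qy / 2) * inverse (hh g * sqrt B) + (- (hh g * (inverse (sqrt B) / 2 * By) * inverse ((hh g * sqrt B) ^ Suc (Suc 0))))
        * Ahat g r (c t0)) (at t0)"
    using DERIV_mult[OF Ad DERIV_inverse_fun[OF DERIV_cmult[OF sBd, of "hh g"]]] sB h unfolding B_def by (simp add: algebra_simps)
  moreover have "(snd d - g * qy / 2) * inverse (hh g * sqrt B) + (- (hh g * (inverse (sqrt B) / 2 * By) * inverse ((hh g * sqrt B) ^ Suc (Suc 0))))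
        * Ahat g r (c t0) = snd (dPsi g r (c t0) d)"
    unfolding dPsi_def kk B_def[symmetric] qy_def q_def[symmetric] using sB Bp h by (simp add: field_simps power2_eq_square)
  ultimately show "((\<lambda>t. snd (Psi g r (c t))) has_real_derivative snd (dPsi g r (c t0) d)) (at t0)"
    unfolding Psi_def by (simp add: inverse_eq_divide)
qed

lemma key_ident:
  assumes g: "-2 < g" "g < 2" and sym: "transpose r = r" and q0: "qhat r (fst x) > 0"
    and H1: "FH g r x = 1" and ty: "Tn g r x y = 0" and tw: "Tn g r x w = 0"
  shows "(1/2) * D2 g r x y w = ipr r (dPsi g r x y) (dPsi g r x w)"
proof -
  define q where "q = qhat r (fst x)"
  define Z where "Z = snd x"
  define qy where "qy = blf r (fst x) (fst y) / q"
  define qw where "qw = blf r (fst x) (fst w) / q"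
  define B where "B = Bhat g r x"
  define A where "A = Ahat g r x"
  define h where "h = hh g"
  define By where "By = 2*Z* snd y-g*(qy*Z+q* snd y)+2*q*qy"
  define Bw where "Bw = 2*Z* snd w-g*(qw*Z+q* snd w)+2*q*qw"
  have q: "q > 0" using q0 q_def by simp
  have Bp: "B > 0" unfolding B_def by (rule Bhat_pos[OF g q0])
  have hp: "h > 0" unfolding h_def by (rule hh_pos[OF g])
  have hs: "h^2 = 1 - g^2/4" unfolding h_def by (rule hh_sq[OF g])
  have sB: "sqrt B * sqrt B = B" using Bp by simp
  have EB: "FE g r x * B = 1"
  proof -
    have "(FH g r x)^2 = FH2e g r x" by (rule FH_sq[OF g q0])
    thus ?thesis using H1 unfolding FH2e_def B_def by (simp add: mult.commute)
  qed
  have Bdef: "B = Z^2 - g*q*Z + q^2" unfolding B_def Bhat_def Z_def q_def ..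
  have Adef: "A = Z - g*q/2" unfolding A_def Ahat_def Z_def q_def ..
  have bRY: "blf r (fst x) (fst y) = q * qy" unfolding qy_def using q by simp
  have bRW: "blf r (fst x) (fst w) = q * qw" unfolding qw_def using q by simp
  have bYR: "blf r (fst y) (fst x) = q * qy" using bRY blf_sym[OF sym] by metis
  have bWR: "blf r (fst w) (fst x) = q * qw" using bRW blf_sym[OF sym] by metis
  have bRR: "blf r (fst x) (fst x) = q^2"
  proof -
    have "blf r (fst x) (fst x) > 0" using q0 unfolding qhat_blf by simp
    thus ?thesis unfolding q_def qhat_blf by simp
  qed
  have ty': "(Z - g*q)* snd y + q*qy = 0" using ty unfolding Tn_def Z_def[symmetric] q_def[symmetric] bRY .
  have tw': "(Z - g*q)* snd w + q*qw = 0" using tw unfolding Tn_def Z_def[symmetric] q_def[symmetric] bRW .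
  have ky: "kk g r x y = By/(2*B)" unfolding kk_def Let_def By_def B_def qy_def q_def Z_def ..
  have kw: "kk g r x w = Bw/(2*B)" unfolding kk_def Let_def Bw_def B_def qw_def q_def Z_def ..
  have key: "(snd y-g*qy)* snd w = -(Bw/(2*B))*q*qy-(By/(2*B))*q*qw+(By/(2*B))*(Bw/(2*B))*q*q
          +((snd y-g*qy/2)-(By/(2*B))*A)*((snd w-g*qw/2)-(Bw/(2*B))*A)/h^2"
    by (rule key_alg[OF q Bdef _ hs ty' tw' By_def Bw_def Adef refl refl]) (use Bp hp in auto)
  have lhs: "(1/2) * D2 g r x y w = ((snd y - g*qy) * snd w + blf r (fst y) (fst w)) / B"
  proof -
    have "(1/2) * D2 g r x y w = FE g r x * ((snd y - g*qy) * snd w + blf r (fst y) (fst w))"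
      unfolding D2_def Let_def qy_def[symmetric] q_def[symmetric] using tw by simp
    also have "\<dots> = ((snd y - g*qy) * snd w + blf r (fst y) (fst w)) / B"
    proof -
      have "FE g r x = 1 / B" using EB Bp by (simp add: field_simps)
      thus ?thesis by simp
    qed
    finally show ?thesis .
  qed
  have blfP: "blf r (fst (dPsi g r x y)) (fst (dPsi g r x w)) =
     (blf r (fst y) (fst w) - kk g r x w * (q * qy) - kk g r x y * (q * qw) + kk g r x y * kk g r x w * q^2) / B"
    unfolding dPsi_def B_def[symmetric] using sB Bp
    by (simp add: blf_scale_left blf_scale_right blf_diff_left blf_diff_right bYR bRW bRR field_simps)
  have sndP: "snd (dPsi g r x y) * snd (dPsi g r x w) =
     ((snd y - g*qy/2) - kk g r x y * A) * ((snd w - g*qw/2) - kk g r x w * A) / (h^2 * B)"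
    unfolding dPsi_def B_def[symmetric] A_def[symmetric] h_def[symmetric] qy_def qw_def q_def
    using sB Bp hp by (simp add: field_simps power2_eq_square)
  define P where "P = ((snd y - g*qy/2) - (By/(2*B)) * A) * ((snd w - g*qw/2) - (Bw/(2*B)) * A)"
  have "((snd y - g*qy) * snd w + blf r (fst y) (fst w)) / B =
     (blf r (fst y) (fst w) - (Bw/(2*B)) * (q * qy) - (By/(2*B)) * (q * qw) + (By/(2*B)) * (Bw/(2*B)) * q^2 + P / h^2) / B"
    unfolding key P_def by (simp add: algebra_simps power2_eq_square)
  also have "\<dots> = (blf r (fst y) (fst w) - (Bw/(2*B)) * (q * qy) - (By/(2*B)) * (q * qw) + (By/(2*B)) * (Bw/(2*B)) * q^2) / B
       + P / (h^2 * B)"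
    by (simp add: add_divide_distrib divide_divide_eq_left mult.commute)
  finally show ?thesis unfolding lhs ipr_blf blfP sndP ky kw P_def by simp
qed

lemma kk_lin:
  assumes g: "-2 < g" "g < 2" and q0: "qhat r (fst x) > 0"
  shows "kk g r x y = (2 * snd x - g * qhat r (fst x)) / (2 * Bhat g r x) * snd y
     + (2 * qhat r (fst x) - g * snd x) / (qhat r (fst x) * (2 * Bhat g r x)) * blf r (fst x) (fst y)"
  using Bhat_pos[OF g q0] q0 unfolding kk_def Let_def by (simp add: field_simps)

lemma dPsi_linear:
  assumes g: "-2 < g" "g < 2" and q0: "qhat r (fst x) > 0"
  shows "linear (dPsi g r x)"
proof (rule linearI)
  fix y1 y2
  show "dPsi g r x (y1 + y2) = dPsi g r x y1 + dPsi g r x y2"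
    unfolding dPsi_def kk_lin[OF g q0]
    by (simp add: blf_add_right algebra_simps scaleR_add_left add_divide_distrib diff_divide_distrib)
next
  fix c y
  show "dPsi g r x (c *\<^sub>R y) = c *\<^sub>R dPsi g r x y"
    unfolding dPsi_def kk_lin[OF g q0]
    by (simp add: blf_scale_right algebra_simps scaleR_add_left add_divide_distrib diff_divide_distrib)
qed

lemma Tn_linear: "linear (Tn g r x)"
  by (rule linearI) (simp_all add: Tn_def blf_add_right blf_scale_right algebra_simps)

lemma dPsi_zero:
  assumes g: "-2 < g" "g < 2" and sym: "transpose r = r" and q0: "qhat r (fst x) > 0"
    and d0: "dPsi g r x y = 0" and t0: "Tn g r x y = 0"
  shows "y = 0"
proof -
  define k where "k = kk g r x y"
  define q where "q = qhat r (fst x)"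
  define B where "B = Bhat g r x"
  have Bp: "B > 0" unfolding B_def by (rule Bhat_pos[OF g q0])
  have q: "q > 0" using q0 q_def by simp
  have hp: "hh g > 0" by (rule hh_pos[OF g])
  have bRR: "blf r (fst x) (fst x) = q^2"
  proof -
    have "blf r (fst x) (fst x) > 0" using q0 unfolding qhat_blf by simp
    thus ?thesis unfolding q_def qhat_blf by simp
  qed
  have "(1 / sqrt B) *\<^sub>R (fst y - k *\<^sub>R fst x) = 0" using d0 unfolding dPsi_def k_def B_def by (simp add: prod_eq_iff)
  hence Y: "fst y = k *\<^sub>R fst x" using Bp by simp
  have "(snd y - g * (blf r (fst x) (fst y) / q) / 2 - k * Ahat g r x) / (hh g * sqrt B) = 0"
    using d0 unfolding dPsi_def k_def B_def q_def by (simp add: prod_eq_iff)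
  hence s0: "snd y - g * (blf r (fst x) (fst y) / q) / 2 - k * Ahat g r x = 0" using Bp hp by simp
  have bRY: "blf r (fst x) (fst y) = k * q^2" unfolding Y blf_scale_right bRR ..
  have Zy: "snd y = k * snd x" using s0 q unfolding bRY Ahat_def q_def[symmetric]
    by (simp add: field_simps power2_eq_square, (simp add: algebra_simps)?)
  have "k * B = 0" using t0 unfolding Tn_def Zy bRY B_def Bhat_def q_def[symmetric]
    by (simp add: algebra_simps power2_eq_square)
  hence "k = 0" using Bp by simp
  thus ?thesis using Y Zy by (simp add: prod_eq_iff)
qed

lemma indep_coeffs_zero:
  fixes y :: "'m::finite \<Rightarrow> 'v::real_vector"
  assumes inj: "inj y" and ind: "independent (range y)" and s: "(\<Sum>j\<in>UNIV. b j *\<^sub>R y j) = 0"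
  shows "b j = 0"
proof -
  define u where "u = (\<lambda>z. b (inv y z))"
  have "(\<Sum>z\<in>range y. u z *\<^sub>R z) = (\<Sum>j\<in>UNIV. b j *\<^sub>R y j)"
    by (rule sum.reindex_cong[OF inj refl]) (simp add: u_def inv_f_f[OF inj])
  hence "(\<Sum>z\<in>range y. u z *\<^sub>R z) = 0" using s by simp
  moreover have H: "\<forall>S\<subseteq>range y. finite S \<longrightarrow> (\<forall>u. (\<Sum>v\<in>S. u v *\<^sub>R v) = 0 \<longrightarrow> (\<forall>v\<in>S. u v = 0))"
    using ind unfolding independent_explicit_finite_subsets .
  moreover have fin: "finite (range y)" by simp
  ultimately have "\<forall>z\<in>range y. u z = 0"
    using H[rule_format, OF subset_refl fin] by blast
  hence "u (y j) = 0" by blast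
  thus ?thesis unfolding u_def inv_f_f[OF inj] .
qed

theorem theorem2p6:
  fixes g :: real and r :: "real^'m::finite^'m" and U :: "(real^'m) set"
    and \<phi> :: "real^'m \<Rightarrow> (real^'m) \<times> real" and u :: "real^'m"
  assumes "-2 < g" and "g < 2"
    and "transpose r = r" and "\<forall>x. x \<noteq> 0 \<longrightarrow> 0 < x \<bullet> (r *v x)"
    and "coindicatrix_chart g r U \<phi>" and "u \<in> U"
  shows "(\<forall>l i j k. Riem (ind_metric g r \<phi>) l i j k u =
            (hh g)^2 * (ind_metric g r \<phi> l j u * ind_metric g r \<phi> i k u
                        - ind_metric g r \<phi> l k u * ind_metric g r \<phi> i j u))
         \<and> (hh g)^2 = 1 - g^2/4 \<and> (hh g)^2 = - discB g / 4
         \<and> 0 < (hh g)^2 \<and> (hh g)^2 \<le> 1"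
proof -
  note g = assms(1,2)
  note sym = assms(3) and pos = assms(4) and u = assms(6)
  have U: "open U" and sR: "\<And>a. smooth_fun_on U (\<lambda>u. fst (\<phi> u) $ a)" and sZ: "smooth_fun_on U (\<lambda>u. snd (\<phi> u))"
    and onU: "\<And>v. v \<in> U \<Longrightarrow> FH g r (\<phi> v) = 1 \<and> qhat r (fst (\<phi> v)) > 0"
    and indep: "\<And>v. v \<in> U \<Longrightarrow> inj (\<lambda>i. dphi \<phi> i v) \<and> independent (range (\<lambda>i. dphi \<phi> i v))"
    using assms(5) unfolding coindicatrix_chart_def by auto
  have aR: "alg U (\<lambda>v. fst (\<phi> v) $ a)" for a using sR by (rule alg.base)
  have aZ: "alg U (\<lambda>v. snd (\<phi> v))" using sZ by (rule alg.base)
  have hp: "hh g > 0" by (rule hh_pos[OF g])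
  have hs: "(hh g)^2 = 1 - g^2/4" by (rule hh_sq[OF g])
  define F where "F = (\<lambda>v. Psi g r (\<phi> v))"
  have aQ: "alg U (\<lambda>v. blf r (fst (\<phi> v)) (fst (\<phi> v)))"
    unfolding blf_def by (intro alg_sum alg.mul alg.cnst aR) auto
  have Qpos: "\<forall>v\<in>U. blf r (fst (\<phi> v)) (fst (\<phi> v)) > 0"
    using onU unfolding qhat_blf by auto
  have aq: "alg U (\<lambda>v. qhat r (fst (\<phi> v)))"
    unfolding qhat_blf by (rule alg.sqr[OF aQ Qpos])
  have aB: "alg U (\<lambda>v. Bhat g r (\<phi> v))"
    unfolding Bhat_def by (intro alg.add alg_diff alg_pow alg.mul alg.cnst aZ aq)
  have Bpos: "\<forall>v\<in>U. Bhat g r (\<phi> v) > 0" using onU Bhat_pos[OF g] by blast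
  have asB: "alg U (\<lambda>v. sqrt (Bhat g r (\<phi> v)))" by (rule alg.sqr[OF aB Bpos])
  have sBpos: "\<forall>v\<in>U. sqrt (Bhat g r (\<phi> v)) \<noteq> 0" using Bpos by auto
  have aA: "alg U (\<lambda>v. Ahat g r (\<phi> v))"
    unfolding Ahat_def by (intro alg_diff alg_divide alg.mul alg.cnst aZ aq) auto
  have vF: "vsm U F"
    unfolding vsm_def F_def Psi_def
  proof (intro conjI allI)
    fix a
    show "alg U (\<lambda>v. fst ((1 / sqrt (Bhat g r (\<phi> v))) *\<^sub>R fst (\<phi> v), Ahat g r (\<phi> v) / (hh g * sqrt (Bhat g r (\<phi> v)))) $ a)"
      by (simp, intro alg.mul alg_divide alg.cnst asB aR sBpos)
    show "alg U (\<lambda>v. snd ((1 / sqrt (Bhat g r (\<phi> v))) *\<^sub>R fst (\<phi> v), Ahat g r (\<phi> v) / (hh g * sqrt (Bhat g r (\<phi> v)))))"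
      using sBpos hp by (simp, intro alg_divide alg.mul alg.cnst asB aA) auto
  qed
  have Fc: "\<forall>v\<in>U. ipr r (F v) (F v) = 1 / (hh g)^2"
  proof
    fix v assume v: "v \<in> U"
    have B: "Bhat g r (\<phi> v) > 0" using Bpos v by blast
    have q: "qhat r (fst (\<phi> v)) > 0" using onU v by blast
    have "0 \<le> blf r (fst (\<phi> v)) (fst (\<phi> v))" using Qpos v less_imp_le by blast
    hence bRR: "blf r (fst (\<phi> v)) (fst (\<phi> v)) = (qhat r (fst (\<phi> v)))^2"
      unfolding qhat_blf using real_sqrt_pow2 by simp
    have "ipr r (F v) (F v) = ((qhat r (fst (\<phi> v)))^2 + (Ahat g r (\<phi> v))^2 / (hh g)^2) / Bhat g r (\<phi> v)"
      unfolding F_def Psi_def ipr_blf using B hp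
      by (simp add: blf_scale_left blf_scale_right bRR field_simps power2_eq_square)
    also have "\<dots> = 1 / (hh g)^2"
    proof -
      have "(qhat r (fst (\<phi> v)))^2 + (Ahat g r (\<phi> v))^2 / (hh g)^2 = Bhat g r (\<phi> v) / (hh g)^2"
        unfolding Bhat_eq[OF g, of r "\<phi> v"] using hp by (simp add: field_simps)
      thus ?thesis using B by simp
    qed
    finally show "ipr r (F v) (F v) = 1 / (hh g)^2" .
  qed
  have dR: "((\<lambda>t. fst (\<phi> (v + t *\<^sub>R axis i 1)) $ a) has_real_derivative fst (dphi \<phi> i v) $ a) (at 0)"
    if "v \<in> U" for v i a using alg_deriv[OF U aR that] by simp
  have dZ: "((\<lambda>t. snd (\<phi> (v + t *\<^sub>R axis i 1))) has_real_derivative snd (dphi \<phi> i v)) (at 0)"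
    if "v \<in> U" for v i using alg_deriv[OF U aZ that] by simp
  have dF: "dphi F i v = dPsi g r (\<phi> v) (dphi \<phi> i v)" if v: "v \<in> U" for i v
  proof -
    have q0: "qhat r (fst (\<phi> (v + 0 *\<^sub>R axis i 1))) > 0" using onU v by simp
    have c1: "((\<lambda>t. fst (Psi g r (\<phi> (v + t *\<^sub>R axis i 1))) $ a) has_real_derivative
        fst (dPsi g r (\<phi> (v + 0 *\<^sub>R axis i 1)) (dphi \<phi> i v)) $ a) (at 0)" for a
      by (rule curve_Psi(1)[OF g sym dR[OF v] dZ[OF v] q0])
    have c2: "((\<lambda>t. snd (Psi g r (\<phi> (v + t *\<^sub>R axis i 1)))) has_real_derivative
        snd (dPsi g r (\<phi> (v + 0 *\<^sub>R axis i 1)) (dphi \<phi> i v))) (at 0)"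
      by (rule curve_Psi(2)[OF g sym dR[OF v] dZ[OF v] q0])
    have "fst (dphi F i v) $ a = fst (dPsi g r (\<phi> v) (dphi \<phi> i v)) $ a" for a
      unfolding dphi_fst F_def using c1[of a] by (intro pd_eqI) simp
    moreover have "snd (dphi F i v) = snd (dPsi g r (\<phi> v) (dphi \<phi> i v))"
      unfolding dphi_snd F_def using c2 by (intro pd_eqI) simp
    ultimately show ?thesis by (simp add: prod_eq_iff vec_eq_iff)
  qed
  have tang: "Tn g r (\<phi> v) (dphi \<phi> i v) = 0" if v: "v \<in> U" for i v
  proof -
    have q0: "qhat r (fst (\<phi> (v + 0 *\<^sub>R axis i 1))) > 0" using onU v by simp
    have d: "((\<lambda>t. FH2e g r (\<phi> (v + t *\<^sub>R axis i 1))) has_real_derivative D1 g r (\<phi> (v + 0 *\<^sub>R axis i 1)) (dphi \<phi> i v)) (at 0)"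
      by (rule curve_FH2e[OF g sym dR[OF v] dZ[OF v] q0])
    have ev: "eventually (\<lambda>t. FH2e g r (\<phi> (v + t *\<^sub>R axis i 1)) = 1) (nhds 0)"
      using ev_in_open[OF U v, of "axis i 1"]
    proof (rule eventually_mono)
      fix t assume "v + t *\<^sub>R axis i 1 \<in> U"
      thus "FH2e g r (\<phi> (v + t *\<^sub>R axis i 1)) = 1" using onU FH_sq[OF g] by (metis power_one)
    qed
    have "((\<lambda>t. 1::real) has_real_derivative D1 g r (\<phi> v) (dphi \<phi> i v)) (at 0)"
      using d ev by (subst DERIV_cong_ev[symmetric]) auto
    hence "D1 g r (\<phi> v) (dphi \<phi> i v) = 0" using DERIV_const DERIV_unique by blast
    thus ?thesis unfolding D1_def FE_def by simp
  qed
  have gm: "\<forall>v\<in>U. \<forall>i j. ind_metric g r \<phi> i j v = ipr r (dphi F i v) (dphi F j v)"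
  proof (intro ballI allI)
    fix v i j assume v: "v \<in> U"
    have q: "qhat r (fst (\<phi> v)) > 0" and H: "FH g r (\<phi> v) = 1" using onU v by auto
    have "ind_metric g r \<phi> i j v = (1/2) * D2 g r (\<phi> v) (dphi \<phi> i v) (dphi \<phi> j v)"
      unfolding ind_metric_def hess_FH[OF g sym q] ..
    also have "\<dots> = ipr r (dPsi g r (\<phi> v) (dphi \<phi> i v)) (dPsi g r (\<phi> v) (dphi \<phi> j v))"
      by (rule key_ident[OF g sym q H tang[OF v] tang[OF v]])
    finally show "ind_metric g r \<phi> i j v = ipr r (dphi F i v) (dphi F j v)" using dF[OF v] by simp
  qed
  have det: "\<forall>v\<in>U. det (\<chi> i j. ind_metric g r \<phi> i j v) \<noteq> 0"
  proof
    fix v assume v: "v \<in> U"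
    have q: "qhat r (fst (\<phi> v)) > 0" using onU v by auto
    define M where "M = (\<chi> i j. ind_metric g r \<phi> i j v)"
    have "inj ((*v) M)"
      unfolding linear_injective_0[OF matrix_vector_mul_linear]
    proof (intro allI impI)
      fix b assume Mb: "M *v b = 0"
      define S where "S = (\<Sum>j\<in>UNIV. b $ j *\<^sub>R dphi F j v)"
      have Mi: "(M *v b) $ i = ipr r (dphi F i v) S" for i
      proof -
        have "(M *v b) $ i = (\<Sum>j\<in>UNIV. ind_metric g r \<phi> i j v * b $ j)"
          unfolding M_def matrix_vector_mult_def by simp
        also have "\<dots> = (\<Sum>j\<in>UNIV. b $ j * ipr r (dphi F i v) (dphi F j v))"
        proof (rule sum.cong[OF refl])
          fix j show "ind_metric g r \<phi> i j v * b $ j = b $ j * ipr r (dphi F i v) (dphi F j v)"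
            using gm v by (simp only: mult.commute[of _ "b $ j"])
        qed
        also have "\<dots> = ipr r (dphi F i v) S" unfolding S_def ipr_sum_right ipr_scale_right ..
        finally show ?thesis .
      qed
      have "ipr r S S = (\<Sum>i\<in>UNIV. b $ i * ipr r (dphi F i v) S)"
        unfolding S_def ipr_sum_left ipr_scale_left ..
      also have "\<dots> = (\<Sum>i\<in>UNIV. b $ i * (M *v b) $ i)" unfolding Mi ..
      also have "\<dots> = 0" using Mb by simp
      finally have SS: "ipr r S S = 0" .
      have S0: "S = 0"
      proof (rule ccontr)
        assume "S \<noteq> 0"
        hence "ipr r S S > 0" by (rule ipr_pos[OF pos])
        thus False using SS by simp
      qed
      have lin: "linear (dPsi g r (\<phi> v))" by (rule dPsi_linear[OF g q])
      have d0: "dPsi g r (\<phi> v) (\<Sum>j\<in>UNIV. b $ j *\<^sub>R dphi \<phi> j v) = 0"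
        unfolding linear_sum[OF lin] linear_scale[OF lin] dF[OF v, symmetric] S_def[symmetric] by (rule S0)
      have t0: "Tn g r (\<phi> v) (\<Sum>j\<in>UNIV. b $ j *\<^sub>R dphi \<phi> j v) = 0"
        unfolding linear_sum[OF Tn_linear] linear_scale[OF Tn_linear] using tang[OF v] by simp
      have z: "(\<Sum>j\<in>UNIV. b $ j *\<^sub>R dphi \<phi> j v) = 0"
        by (rule dPsi_zero[OF g sym q d0 t0])
      have "b $ j = 0" for j
        by (rule indep_coeffs_zero[OF conjunct1[OF indep[OF v]] conjunct2[OF indep[OF v]] z])
      thus "b = 0" by (simp add: vec_eq_iff)
    qed
    thus "det (\<chi> i j. ind_metric g r \<phi> i j v) \<noteq> 0"
      using det_nz_iff_inj[OF matrix_vector_mul_linear, of M] unfolding M_def matrix_of_matrix_vector_mul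
      by simp
  qed
  have c: "1 / (hh g)^2 \<noteq> 0" using hp by simp
  have R: "Riem (ind_metric g r \<phi>) l i j k u =
            (hh g)^2 * (ind_metric g r \<phi> l j u * ind_metric g r \<phi> i k u
                        - ind_metric g r \<phi> l k u * ind_metric g r \<phi> i j u)" for l i j k
    using gauss[OF U u sym pos vF c Fc gm det, of l i j k] by simp
  have "g^2 < 4" by (rule g_sq_lt[OF g])
  moreover have "0 \<le> g^2" by simp
  ultimately show ?thesis using R hs unfolding discB_def by simp
qed

end
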